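(* Let $C$ be a bivariate copula that is stochastically increasing (SI) or stochastically decreasing (SD). Then \[ \xi(C)\le|\rho(C)|, \] with equality if and only if $C\in\{W,\Pi,M\}$, where $W(u,v)=\max\{u+v-1,0\}$, $\Pi(u,v)=uv$ and $M(u,v)=\min\{u,v\}$.
   Context: A (bivariate) copula is a function $C:[0,1]^2\to[0,1]$ that is grounded, has uniform margins and is 2-increasing. For a copula $C$, $\rho(C)=12\int_{[0,1]^2}C(u,v)\,du\,dv-3$ (Spearman's rho) and $\xi(C)=6\int_0^1\int_0^1(\partial_1C(t,v))^2\,dt\,dv-2$ (Chatterjee's xi), with $\partial_1$ the partial derivative in the first argument. A copula $C$ is SI (resp. SD) if, for $(U,V)\sim C$, the map $u\mapsto P(V\ge v\mid U=u)$ is increasing (resp. decreasing) outside a Lebesgue null set for every $v$; equivalently, $C(\cdot,v)$ is concave (resp. convex) for every $v\in[0,1]$. *)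

theory Defs
  imports "HOL-Analysis.Analysis"
begin

text \<open>A bivariate copula, represented by a function real => real => real whose values
  are only relevant on the unit square [0,1]^2.\<close>
definition copula :: "(real \<Rightarrow> real \<Rightarrow> real) \<Rightarrow> bool" where
  "copula C \<longleftrightarrow>
     (\<forall>u\<in>{0..1}. C u 0 = 0 \<and> C 0 u = 0 \<and> C u 1 = u \<and> C 1 u = u) \<and>
     (\<forall>u1\<in>{0..1}. \<forall>u2\<in>{0..1}. \<forall>v1\<in>{0..1}. \<forall>v2\<in>{0..1}.
        u1 \<le> u2 \<longrightarrow> v1 \<le> v2 \<longrightarrow> C u2 v2 - C u2 v1 - C u1 v2 + C u1 v1 \<ge> 0)"

definition copW :: "real \<Rightarrow> real \<Rightarrow> real" where
  "copW u v = max (u + v - 1) 0"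

definition copPi :: "real \<Rightarrow> real \<Rightarrow> real" where
  "copPi u v = u * v"

definition copM :: "real \<Rightarrow> real \<Rightarrow> real" where
  "copM u v = min u v"

text \<open>Partial derivative in the first argument (set to 0 where it does not exist;
  copulas are Lipschitz, so this is a Lebesgue null set for every v).\<close>
definition d1 :: "(real \<Rightarrow> real \<Rightarrow> real) \<Rightarrow> real \<Rightarrow> real \<Rightarrow> real" where
  "d1 C t v = (if (\<lambda>s. C s v) differentiable (at t) then deriv (\<lambda>s. C s v) t else 0)"

definition spearman_rho :: "(real \<Rightarrow> real \<Rightarrow> real) \<Rightarrow> real" where
  "spearman_rho C = 12 * integral ({0..1} \<times> {0..1}) (\<lambda>(u, v). C u v) - 3"

definition chatterjee_xi :: "(real \<Rightarrow> real \<Rightarrow> real) \<Rightarrow> real" where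
  "chatterjee_xi C = 6 * integral {0..1} (\<lambda>v. integral {0..1} (\<lambda>t. (d1 C t v)\<^sup>2)) - 2"

definition SI :: "(real \<Rightarrow> real \<Rightarrow> real) \<Rightarrow> bool" where
  "SI C \<longleftrightarrow> (\<forall>v\<in>{0..1}. concave_on {0..1} (\<lambda>u. C u v))"

definition SD :: "(real \<Rightarrow> real \<Rightarrow> real) \<Rightarrow> bool" where
  "SD C \<longleftrightarrow> (\<forall>v\<in>{0..1}. convex_on {0..1} (\<lambda>u. C u v))"

definition eq_on_square :: "(real \<Rightarrow> real \<Rightarrow> real) \<Rightarrow> (real \<Rightarrow> real \<Rightarrow> real) \<Rightarrow> bool" where
  "eq_on_square C D \<longleftrightarrow> (\<forall>u\<in>{0..1}. \<forall>v\<in>{0..1}. C u v = D u v)"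

end

theory Submission
  imports Defs
begin

lemma countable_negligible:
  fixes S :: "real set"
  assumes "countable S" shows "negligible S"
proof -
  have "S = (\<Union>x\<in>S. {x})" by auto
  moreover have "negligible (\<Union>x\<in>S. {x})"
    by (rule negligible_countable_Union) (use assms in auto)
  ultimately show ?thesis by simp
qed

lemma integral0_negligible:
  fixes f :: "real \<Rightarrow> real"
  assumes "(f has_integral 0) S" "\<And>x. x \<in> S \<Longrightarrow> 0 \<le> f x"
  shows "negligible {x\<in>S. f x \<noteq> 0}"
proof -
  have ai: "f absolutely_integrable_on S"
    using assms by (intro nonnegative_absolutely_integrable_1) (auto simp: has_integral_integrable)
  define h where "h x = indicator S x *\<^sub>R f x" for x
  have hi: "integrable lebesgue h" using ai unfolding set_integrable_def h_def .
  have "(LINT x:S | lebesgue. f x) = integral S f"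
    using set_lebesgue_integral_eq_integral(2)[OF ai] .
  also have "\<dots> = 0" using assms(1) by (simp add: integral_unique)
  finally have "integral\<^sup>L lebesgue h = 0"
    unfolding set_lebesgue_integral_def h_def .
  moreover have "AE x in lebesgue. 0 \<le> h x"
    using assms(2) by (auto simp: h_def indicator_def)
  ultimately have "AE x in lebesgue. h x = 0"
    using integral_nonneg_eq_0_iff_AE[OF hi] by simp
  then obtain N where N: "negligible N" "{x. \<not> h x = 0} \<subseteq> N"
    unfolding eventually_ae_filter_negligible by blast
  have "{x\<in>S. f x \<noteq> 0} \<subseteq> N" using N(2) by (auto simp: h_def indicator_def)
  then show ?thesis using N(1) negligible_subset by blast
qed

lemma sq_integral:
  fixes h \<Phi> \<omega> :: "real \<Rightarrow> real"
  assumes ab: "a \<le> b" and hint: "h integrable_on {a..b}" and mono: "mono_on {a..b} \<omega>"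
    and est: "\<And>s t. a \<le> s \<Longrightarrow> s \<le> t \<Longrightarrow> t \<le> b \<Longrightarrow>
      \<bar>integral {s..t} h - (\<Phi> t - \<Phi> s)\<bar> \<le> (t - s) * (\<omega> t - \<omega> s) + K * (t - s)^2"
  shows "(h has_integral (\<Phi> b - \<Phi> a)) {a..b}"
proof -
  define c where "c = (b - a) * ((\<omega> b - \<omega> a) + K * (b - a))"
  have key: "\<bar>integral {a..b} h - (\<Phi> b - \<Phi> a)\<bar> \<le> c / real n" if n: "n > 0" for n :: nat
  proof -
    define d where "d = (b - a) / real n"
    define x where "x k = a + real k * d" for k :: nat
    have d0: "d \<ge> 0" using ab n by (simp add: d_def)
    have xn: "x n = b" using n by (simp add: x_def d_def)
    have xle: "x k \<le> b" if "k \<le> n" for k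
    proof -
      have "real k * d \<le> real n * d" using that d0 by (simp add: mult_right_mono)
      then show ?thesis using xn by (simp add: x_def)
    qed
    have xge: "a \<le> x k" for k using d0 by (simp add: x_def)
    have "k \<le> n \<longrightarrow> \<bar>integral {a..x k} h - (\<Phi> (x k) - \<Phi> a)\<bar> \<le> d * (\<omega> (x k) - \<omega> a) + K * d * (x k - a)" for k
    proof (induction k)
      case 0
      then show ?case by (simp add: x_def)
    next
      case (Suc k)
      show ?case
      proof
        assume k: "Suc k \<le> n"
        have xs: "x (Suc k) = x k + d" by (simp add: x_def algebra_simps)
        have b1: "x k \<le> x (Suc k)" using xs d0 by simp
        have b2: "x (Suc k) \<le> b" using xle k by blast
        have IH: "\<bar>integral {a..x k} h - (\<Phi> (x k) - \<Phi> a)\<bar> \<le> d * (\<omega> (x k) - \<omega> a) + K * d * (x k - a)"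
          using Suc k by simp
        have hi2: "h integrable_on {a..x (Suc k)}"
          using integrable_subinterval_real[OF hint] b2 by auto
        have comb: "integral {a..x k} h + integral {x k..x (Suc k)} h = integral {a..x (Suc k)} h"
          using Henstock_Kurzweil_Integration.integral_combine[OF xge b1 hi2] .
        have E: "\<bar>integral {x k..x (Suc k)} h - (\<Phi> (x (Suc k)) - \<Phi> (x k))\<bar>
            \<le> (x (Suc k) - x k) * (\<omega> (x (Suc k)) - \<omega> (x k)) + K * (x (Suc k) - x k)^2"
          using est[OF xge b1 b2] .
        have "\<bar>integral {a..x (Suc k)} h - (\<Phi> (x (Suc k)) - \<Phi> a)\<bar>
            \<le> \<bar>integral {a..x k} h - (\<Phi> (x k) - \<Phi> a)\<bar> + \<bar>integral {x k..x (Suc k)} h - (\<Phi> (x (Suc k)) - \<Phi> (x k))\<bar>"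
          using comb by linarith
        also have "\<dots> \<le> d * (\<omega> (x k) - \<omega> a) + K * d * (x k - a) + (d * (\<omega> (x (Suc k)) - \<omega> (x k)) + K * d^2)"
          using IH E xs by simp
        also have "\<dots> = d * (\<omega> (x (Suc k)) - \<omega> a) + K * d * (x (Suc k) - a)"
          using xs by (simp add: algebra_simps power2_eq_square)
        finally show "\<bar>integral {a..x (Suc k)} h - (\<Phi> (x (Suc k)) - \<Phi> a)\<bar> \<le> d * (\<omega> (x (Suc k)) - \<omega> a) + K * d * (x (Suc k) - a)" .
      qed
    qed
    then have "\<bar>integral {a..b} h - (\<Phi> b - \<Phi> a)\<bar> \<le> d * (\<omega> b - \<omega> a) + K * d * (b - a)"
      using xn by (metis order_refl)
    also have "\<dots> = d * ((\<omega> b - \<omega> a) + K * (b - a))" by (simp add: algebra_simps)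
    also have "\<dots> = c / real n" by (simp add: c_def d_def)
    finally show ?thesis .
  qed
  have "\<bar>integral {a..b} h - (\<Phi> b - \<Phi> a)\<bar> \<le> 0"
  proof (rule ccontr)
    assume "\<not> ?thesis"
    then have e: "\<bar>integral {a..b} h - (\<Phi> b - \<Phi> a)\<bar> > 0" by simp
    obtain n :: nat where nn: "c / \<bar>integral {a..b} h - (\<Phi> b - \<Phi> a)\<bar> < real n"
      using reals_Archimedean2 by blast
    then have "n > 0"
    proof (cases "n = 0")
      case True
      have "\<bar>integral {a..b} h - (\<Phi> b - \<Phi> a)\<bar> \<le> c / real 1" using key[of 1] by simp
      then have "c > 0" using e by simp
      then have "c / \<bar>integral {a..b} h - (\<Phi> b - \<Phi> a)\<bar> > 0" using e by simp
      then show ?thesis using nn True by simp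
    qed simp
    have "c < \<bar>integral {a..b} h - (\<Phi> b - \<Phi> a)\<bar> * real n"
      using nn e by (simp add: divide_less_eq mult.commute)
    then have "c / real n < \<bar>integral {a..b} h - (\<Phi> b - \<Phi> a)\<bar>"
      using \<open>n > 0\<close> by (simp add: divide_less_eq)
    then show False using key[OF \<open>n > 0\<close>] by linarith
  qed
  then have "integral {a..b} h = \<Phi> b - \<Phi> a" by simp
  then show ?thesis using hint by (metis integrable_integral)
qed

lemma concave_slope3:
  fixes F :: "real \<Rightarrow> real"
  assumes conc: "concave_on {0..1} F" and xyz: "0 \<le> x" "x < y" "y < z" "z \<le> 1"
  shows "(F z - F x) * (y - x) \<le> (F y - F x) * (z - x)"
    and "(F z - F y) * (z - x) \<le> (F z - F x) * (z - y)"
proof -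
  have c2: "concave_on {x..z} F"
    unfolding concave_on_def using convex_on_subset[OF conc[unfolded concave_on_def], of "{x..z}"] xyz by auto
  have "F y \<ge> (F z - F x) / (z - x) * (y - x) + F x"
    using concave_onD_Icc'[OF c2, of y] xyz by simp
  then have "F y * (z - x) \<ge> ((F z - F x) / (z - x) * (y - x) + F x) * (z - x)"
    using xyz by (simp add: mult_right_mono)
  also have "((F z - F x) / (z - x) * (y - x) + F x) * (z - x) = (F z - F x) * (y - x) + F x * (z - x)"
    using xyz by (simp add: field_simps)
  finally have key: "F y * (z - x) \<ge> (F z - F x) * (y - x) + F x * (z - x)" .
  show "(F z - F x) * (y - x) \<le> (F y - F x) * (z - x)"
    using key by (simp add: algebra_simps)
  show "(F z - F y) * (z - x) \<le> (F z - F x) * (z - y)"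
    using key by (simp add: algebra_simps)
qed

lemma concave_slope_fun:
  fixes F :: "real \<Rightarrow> real"
  assumes conc: "concave_on {0..1} F"
    and lip: "\<And>s t. 0 \<le> s \<Longrightarrow> s \<le> t \<Longrightarrow> t \<le> 1 \<Longrightarrow> 0 \<le> F t - F s \<and> F t - F s \<le> t - s"
  obtains g S where "countable S" "\<And>t. t \<in> {0..1} \<Longrightarrow> 0 \<le> g t \<and> g t \<le> 1"
    "\<And>s t. 0 \<le> s \<Longrightarrow> s < t \<Longrightarrow> t \<le> 1 \<Longrightarrow> g t * (t - s) \<le> F t - F s \<and> F t - F s \<le> g s * (t - s)"
    "\<And>t. t \<in> {0<..<1} - S \<Longrightarrow> (F has_real_derivative g t) (at t)"
proof -
  define sl where "sl s t = (F t - F s) / (t - s)" for s t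
  define g where "g t = (if t \<le> 0 then 1 else Inf ((\<lambda>s. sl s t) ` {0..<t}))" for t
  have sl01: "0 \<le> sl s t \<and> sl s t \<le> 1" if "0 \<le> s" "s < t" "t \<le> 1" for s t
    using lip[of s t] that by (auto simp: sl_def divide_le_eq_1)
  have bdd: "bdd_below ((\<lambda>s. sl s t) ` {0..<t})" if "0 < t" "t \<le> 1" for t
    using sl01 that by (intro bdd_belowI[where m=0]) auto
  have ga: "g t \<le> sl s t" if "0 \<le> s" "s < t" "t \<le> 1" for s t
  proof -
    have "t > 0" using that by simp
    then show ?thesis unfolding g_def using that bdd[of t]
      by (auto intro!: cInf_lower)
  qed
  have gb: "0 \<le> g t \<and> g t \<le> 1" if "t \<in> {0..1}" for t
  proof (cases "t \<le> 0")
    case True then show ?thesis by (simp add: g_def)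
  next
    case False
    then have t: "0 < t" "t \<le> 1" using that by auto
    have "0 \<le> g t" unfolding g_def using t sl01
      by (auto intro!: cInf_greatest)
    moreover have "g t \<le> 1" using ga[of 0 t] sl01[of 0 t] t by simp
    ultimately show ?thesis by simp
  qed
  have gc: "sl s t \<le> g s" if st: "0 \<le> s" "s < t" "t \<le> 1" for s t
  proof (cases "s = 0")
    case True then show ?thesis using sl01[of s t] st by (simp add: g_def)
  next
    case False
    then have s0: "s > 0" using st by simp
    have "sl s t \<le> sl r s" if r: "r \<in> {0..<s}" for r
    proof -
      have r0: "0 \<le> r" "r < s" using r by auto
      have 1: "(F t - F r) * (s - r) \<le> (F s - F r) * (t - r)"
        using concave_slope3(1)[OF conc r0 \<open>s < t\<close> \<open>t \<le> 1\<close>] .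
      have 2: "(F t - F s) * (t - r) \<le> (F t - F r) * (t - s)"
        using concave_slope3(2)[OF conc r0 \<open>s < t\<close> \<open>t \<le> 1\<close>] .
      have "sl s t \<le> sl r t" using 2 r0 st
        by (simp add: sl_def divide_simps mult.commute)
      also have "sl r t \<le> sl r s" using 1 r0 st
        by (simp add: sl_def divide_simps mult.commute)
      finally show ?thesis .
    qed
    then show ?thesis using s0 unfolding g_def
      by (auto intro!: cInf_greatest)
  qed
  have sq: "g t * (t - s) \<le> F t - F s \<and> F t - F s \<le> g s * (t - s)"
    if "0 \<le> s" "s < t" "t \<le> 1" for s t
  proof -
    have e: "F t - F s = sl s t * (t - s)" using that by (simp add: sl_def)
    show ?thesis unfolding e using ga[OF that] gc[OF that] that
      by (auto intro!: mult_right_mono)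
  qed
  have anti: "g t \<le> g s" if "0 \<le> s" "s < t" "t \<le> 1" for s t
    using ga[OF that] gc[OF that] by simp
  have mono: "mono_on {0<..<1} (\<lambda>x. - g x)"
    by (rule mono_onI) (metis anti greaterThanLessThan_iff le_less less_imp_le neg_le_iff_le)
  define S where "S = {t \<in> {0<..<1}. \<not> isCont (\<lambda>x. - g x) t}"
  have cS: "countable S" unfolding S_def
    by (rule mono_on_ctble_discont_open[OF _ mono]) simp
  have der: "(F has_real_derivative g t) (at t)" if t: "t \<in> {0<..<1} - S" for t
  proof -
    have t01: "0 < t" "t < 1" using t by auto
    have "isCont (\<lambda>x. - g x) t" using t by (auto simp: S_def)
    from isCont_minus[OF this] have "isCont (\<lambda>x. - (- g x)) t" .
    then have gt: "(g \<longlongrightarrow> g t) (at t)" by (simp add: isCont_def)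
    have e1: "eventually (\<lambda>y. y \<in> {0<..<1}) (nhds t)"
      by (rule eventually_nhds_in_open) (use t01 in auto)
    then have e2: "eventually (\<lambda>y. y \<in> {0<..<1} \<and> y \<noteq> t) (at t)"
      unfolding eventually_at_filter by (auto elim: eventually_mono)
    have ev: "eventually (\<lambda>y. min (g y) (g t) \<le> (F y - F t) / (y - t) \<and> (F y - F t) / (y - t) \<le> max (g y) (g t)) (at t)"
      using e2
    proof (rule eventually_mono)
      fix y assume y: "y \<in> {0<..<1} \<and> y \<noteq> t"
      then have y01: "0 < y" "y < 1" by auto
      show "min (g y) (g t) \<le> (F y - F t) / (y - t) \<and> (F y - F t) / (y - t) \<le> max (g y) (g t)"
      proof (cases "y < t")
        case True
        have q: "(F y - F t) / (y - t) = sl y t" by (simp add: sl_def divide_simps algebra_simps)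
        have "g t \<le> sl y t" "sl y t \<le> g y" using ga[of y t] gc[of y t] True y01 t01 by auto
        then show ?thesis unfolding q by linarith
      next
        case False
        then have "t < y" using y by auto
        have q: "(F y - F t) / (y - t) = sl t y" by (simp add: sl_def)
        have "g y \<le> sl t y" "sl t y \<le> g t" using ga[of t y] gc[of t y] \<open>t < y\<close> y01 t01 by auto
        then show ?thesis unfolding q by linarith
      qed
    qed
    have l1: "((\<lambda>y. min (g y) (g t)) \<longlongrightarrow> min (g t) (g t)) (at t)"
      by (intro tendsto_min gt tendsto_const)
    have l2: "((\<lambda>y. max (g y) (g t)) \<longlongrightarrow> max (g t) (g t)) (at t)"
      by (intro tendsto_max gt tendsto_const)
    have "((\<lambda>y. (F y - F t) / (y - t)) \<longlongrightarrow> g t) (at t)"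
      by (rule tendsto_sandwich[OF _ _ l1[simplified] l2[simplified]])
         (use ev in \<open>auto elim: eventually_mono\<close>)
    then show ?thesis by (simp add: has_field_derivative_iff)
  qed
  show ?thesis
    by (rule that[OF cS gb sq der]) auto
qed

lemma int_bounds:
  fixes f :: "real \<Rightarrow> real"
  assumes "f integrable_on {s..t}" "s \<le> t" "\<And>x. x \<in> {s..t} \<Longrightarrow> lo \<le> f x \<and> f x \<le> hi"
  shows "lo * (t - s) \<le> integral {s..t} f \<and> integral {s..t} f \<le> hi * (t - s)"
proof -
  have "integral {s..t} (\<lambda>x. lo) \<le> integral {s..t} f"
    by (rule Henstock_Kurzweil_Integration.integral_le) (use assms in auto)
  moreover have "integral {s..t} f \<le> integral {s..t} (\<lambda>x. hi)"
    by (rule Henstock_Kurzweil_Integration.integral_le) (use assms in auto)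
  ultimately show ?thesis using assms(2) by (simp add: mult.commute)
qed

lemma mono_on_borel_leb:
  fixes f :: "real \<Rightarrow> real"
  assumes "mono_on {a..b} f"
  shows "f \<in> borel_measurable (lebesgue_on {a..b})"
proof -
  have "f \<in> borel_measurable (restrict_space borel {a..b})"
    using borel_measurable_mono_on_fnc[OF assms] .
  moreover have "space lborel = space lebesgue" "sets borel \<subseteq> sets lebesgue"
    by force+
  ultimately show ?thesis
    by (metis borel_measurable_subalgebra mono_restrict_space space_lborel space_restrict_space)
qed

lemma bounded_meas_integrable:
  fixes f :: "real \<Rightarrow> real"
  assumes "f \<in> borel_measurable (lebesgue_on {a..b})" "\<And>x. x \<in> {a..b} \<Longrightarrow> \<bar>f x\<bar> \<le> B"
  shows "f integrable_on {a..b}"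
proof (rule measurable_bounded_by_integrable_imp_integrable_real[where g="\<lambda>x. B"])
  show "f \<in> borel_measurable (lebesgue_on {a..b})" by (rule assms(1))
  show "(\<lambda>x. B) integrable_on {a..b}" using has_integral_const_real by (rule has_integral_integrable)
  show "\<And>x. x \<in> {a..b} \<Longrightarrow> \<bar>f x\<bar> \<le> B" by (rule assms(2))
  show "{a..b} \<in> sets lebesgue" by simp
qed

lemma ftc_sq:
  fixes F g :: "real \<Rightarrow> real" and \<sigma> :: real
  assumes \<sigma>: "\<sigma> = 1 \<or> \<sigma> = -1"
    and g01: "\<And>t. t \<in> {0..1} \<Longrightarrow> 0 \<le> g t \<and> g t \<le> 1"
    and gmono: "\<And>s t. 0 \<le> s \<Longrightarrow> s \<le> t \<Longrightarrow> t \<le> 1 \<Longrightarrow> \<sigma> * (g t - g s) \<le> 0"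
    and sq: "\<And>s t. 0 \<le> s \<Longrightarrow> s < t \<Longrightarrow> t \<le> 1 \<Longrightarrow>
        min (g s) (g t) * (t - s) \<le> F t - F s \<and> F t - F s \<le> max (g s) (g t) * (t - s)"
    and Fc: "continuous_on {0..1} F"
  shows ftc_sq_ftc: "\<And>a b. 0 \<le> a \<Longrightarrow> a \<le> b \<Longrightarrow> b \<le> 1 \<Longrightarrow> (g has_integral F b - F a) {a..b}"
    and ftc_sq_tg: "((\<lambda>t. t * g t) has_integral (F 1 - integral {0..1} F)) {0..1}"
    and ftc_sq_g2: "(\<lambda>t. (g t)^2) integrable_on {0..1}"
    and ftc_sq_g: "g integrable_on {0..1}"
proof -
  define \<omega> where "\<omega> t = - \<sigma> * g t" for t
  have \<omega>mono: "mono_on {0..1} \<omega>"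
  proof (rule mono_onI)
    fix s t :: real assume "s \<in> {0..1}" "t \<in> {0..1}" "s \<le> t"
    then have "\<sigma> * (g t - g s) \<le> 0" using gmono by auto
    then show "\<omega> s \<le> \<omega> t" unfolding \<omega>_def by (simp add: algebra_simps)
  qed
  have g\<omega>: "g t = - \<sigma> * \<omega> t" for t using \<sigma> by (auto simp: \<omega>_def)
  have absd: "\<bar>g t - g s\<bar> = \<omega> t - \<omega> s" if "0 \<le> s" "s \<le> t" "t \<le> 1" for s t
    using gmono[OF that] \<sigma> by (auto simp: \<omega>_def)
  have between: "min (g s) (g t) \<le> g x \<and> g x \<le> max (g s) (g t)"
    if "0 \<le> s" "s \<le> x" "x \<le> t" "t \<le> 1" for s t x
  proof -
    have 1: "\<sigma> * (g x - g s) \<le> 0" using gmono that by auto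
    have 2: "\<sigma> * (g t - g x) \<le> 0" using gmono that by auto
    show ?thesis using \<sigma> 1 2 by auto
  qed
  have \<omega>meas: "\<omega> \<in> borel_measurable (lebesgue_on {0..1})"
    by (rule mono_on_borel_leb[OF \<omega>mono])
  have gmeas: "g \<in> borel_measurable (lebesgue_on {0..1})"
  proof -
    have eq: "g = (\<lambda>t. - \<sigma> * \<omega> t)" using g\<omega> by (intro ext) simp
    show ?thesis unfolding eq using \<omega>meas by measurable
  qed
  show gint: "g integrable_on {0..1}"
    by (rule bounded_meas_integrable[OF gmeas, where B=1]) (use g01 in auto)
  show "(\<lambda>t. (g t)^2) integrable_on {0..1}"
  proof (rule bounded_meas_integrable[where B=1])
    show "(\<lambda>t. (g t)^2) \<in> borel_measurable (lebesgue_on {0..1})" using gmeas by measurable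
    show "\<bar>(g x)^2\<bar> \<le> 1" if "x \<in> {0..1}" for x
      using g01[OF that] by (simp add: power_le_one abs_le_iff)
  qed
  have tgint: "(\<lambda>t. t * g t) integrable_on {0..1}"
  proof (rule bounded_meas_integrable[where B=1])
    have idm: "(\<lambda>x::real. x) \<in> borel_measurable (lebesgue_on {0..1})"
      by (intro measurable_restrict_space1 measurable_completion) simp
    show "(\<lambda>t. t * g t) \<in> borel_measurable (lebesgue_on {0..1})"
      by (rule borel_measurable_times[OF idm gmeas])
    show "\<bar>x * g x\<bar> \<le> 1" if "x \<in> {0..1}" for x
      using g01[OF that] that by (simp add: abs_mult mult_le_one)
  qed
  have Fmono: "F s \<le> F t" if "0 \<le> s" "s \<le> t" "t \<le> 1" for s t
  proof (cases "s = t")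
    case False
    then have "s < t" using that by simp
    have "0 \<le> min (g s) (g t)" using g01 that by auto
    then have "0 \<le> min (g s) (g t) * (t - s)" using \<open>s < t\<close> by simp
    then show ?thesis using sq[OF that(1) \<open>s < t\<close> that(3)] by linarith
  qed simp
  show ftc: "(g has_integral F b - F a) {a..b}" if ab: "0 \<le> a" "a \<le> b" "b \<le> 1" for a b
  proof (rule sq_integral[where \<omega>=\<omega> and K=0])
    show "a \<le> b" by (rule ab(2))
    show "g integrable_on {a..b}" using integrable_subinterval_real[OF gint] ab by auto
    show "mono_on {a..b} \<omega>" using mono_on_subset[OF \<omega>mono, of "{a..b}"] ab by auto
    fix s t assume st: "a \<le> s" "s \<le> t" "t \<le> b"
    show "\<bar>integral {s..t} g - (F t - F s)\<bar> \<le> (t - s) * (\<omega> t - \<omega> s) + 0 * (t - s)^2"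
    proof (cases "s = t")
      case True then show ?thesis by simp
    next
      case False
      then have lt: "s < t" using st by simp
      have s0: "0 \<le> s" "t \<le> 1" using st ab by auto
      have I: "min (g s) (g t) * (t - s) \<le> integral {s..t} g \<and> integral {s..t} g \<le> max (g s) (g t) * (t - s)"
        by (rule int_bounds) (use integrable_subinterval_real[OF gint] s0 st between in auto)
      have D: "min (g s) (g t) * (t - s) \<le> F t - F s \<and> F t - F s \<le> max (g s) (g t) * (t - s)"
        using sq[OF s0(1) lt s0(2)] .
      have "\<bar>integral {s..t} g - (F t - F s)\<bar> \<le> max (g s) (g t) * (t - s) - min (g s) (g t) * (t - s)"
        using I D by linarith
      also have "\<dots> = \<bar>g t - g s\<bar> * (t - s)" by (simp add: algebra_simps max_def min_def)
      also have "\<dots> = (t - s) * (\<omega> t - \<omega> s)" using absd[of s t] s0 st by simp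
      finally show ?thesis by simp
    qed
  qed
  have Fint: "F integrable_on {a..b}" if "0 \<le> a" "b \<le> 1" for a b
    using integrable_continuous_real[OF continuous_on_subset[OF Fc]] that by auto
  define \<Phi> where "\<Phi> u = u * F u - integral {0..u} F" for u
  have "((\<lambda>t. t * g t) has_integral (\<Phi> 1 - \<Phi> 0)) {0..1}"
  proof (rule sq_integral[where \<omega>=\<omega> and K=1])
    show "(0::real) \<le> 1" by simp
    show "(\<lambda>t. t * g t) integrable_on {0..1}" by (rule tgint)
    show "mono_on {0..1} \<omega>" by (rule \<omega>mono)
    fix s t :: real assume st: "0 \<le> s" "s \<le> t" "t \<le> 1"
    show "\<bar>integral {s..t} (\<lambda>t. t * g t) - (\<Phi> t - \<Phi> s)\<bar> \<le> (t - s) * (\<omega> t - \<omega> s) + 1 * (t - s)^2"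
    proof (cases "s = t")
      case True then show ?thesis by simp
    next
      case False
      then have lt: "s < t" using st by simp
      define m where "m = min (g s) (g t)"
      define M where "M = max (g s) (g t)"
      define D where "D = F t - F s"
      define IF where "IF = integral {s..t} F"
      define I where "I = integral {s..t} (\<lambda>t. t * g t)"
      have mM: "0 \<le> m" "m \<le> M" "M \<le> 1" using g01 st by (auto simp: m_def M_def)
      have MD: "M - m = \<omega> t - \<omega> s" using absd[OF st] by (simp add: M_def m_def max_def min_def abs_if split: if_splits)
      have Dm: "m * (t - s) \<le> D" "D \<le> M * (t - s)" using sq[OF st(1) lt st(3)] by (auto simp: D_def m_def M_def)
      have comb: "integral {0..s} F + integral {s..t} F = integral {0..t} F"
        by (rule Henstock_Kurzweil_Integration.integral_combine) (use st Fint in auto)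
      have Phi: "\<Phi> t - \<Phi> s = t * F t - s * F s - IF" using comb by (simp add: \<Phi>_def IF_def)
      have IFb: "F s * (t - s) \<le> IF \<and> IF \<le> F t * (t - s)" unfolding IF_def
        by (rule int_bounds) (use Fint st Fmono in auto)
      have Ib: "s * m * (t - s) \<le> I \<and> I \<le> t * M * (t - s)" unfolding I_def
      proof (rule int_bounds)
        show "(\<lambda>t. t * g t) integrable_on {s..t}" using integrable_subinterval_real[OF tgint] st by auto
        show "s \<le> t" by (rule st(2))
        fix x assume x: "x \<in> {s..t}"
        have b: "m \<le> g x" "g x \<le> M" using between[of s x t] x st by (auto simp: m_def M_def)
        have "s * m \<le> x * g x" using x st mM b by (intro mult_mono) auto
        moreover have "x * g x \<le> t * M" using x st mM b by (intro mult_mono) auto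
        ultimately show "s * m \<le> x * g x \<and> x * g x \<le> t * M" by simp
      qed
      have P1: "s * D \<le> \<Phi> t - \<Phi> s"
      proof -
        have "t * F t - s * F s - F t * (t - s) = s * D" by (simp add: D_def algebra_simps)
        then show ?thesis using Phi IFb by linarith
      qed
      have P2: "\<Phi> t - \<Phi> s \<le> t * D"
      proof -
        have "t * F t - s * F s - F s * (t - s) = t * D" by (simp add: D_def algebra_simps)
        then show ?thesis using Phi IFb by linarith
      qed
      have Q1: "s * (m * (t - s)) \<le> s * D" using Dm st by (intro mult_left_mono) auto
      have Q2: "t * D \<le> t * (M * (t - s))" using Dm st by (intro mult_left_mono) auto
      have R1: "t * (M - m) \<le> M - m" using st mM by (simp add: mult_left_le_one_le)
      have R2: "(t - s) * m \<le> (t - s)" using st mM lt by (simp add: mult_left_le)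
      have "\<bar>I - (\<Phi> t - \<Phi> s)\<bar> \<le> t * M * (t - s) - s * m * (t - s)"
        using Ib P1 P2 Q1 Q2 by (simp add: abs_le_iff algebra_simps) linarith
      also have "\<dots> = (t * (M - m) + (t - s) * m) * (t - s)" by (simp add: algebra_simps)
      also have "\<dots> \<le> ((M - m) + (t - s)) * (t - s)"
      proof (rule mult_right_mono)
        show "t * (M - m) + (t - s) * m \<le> M - m + (t - s)" using R1 R2 by linarith
      qed (use lt in auto)
      also have "\<dots> = (t - s) * (M - m) + 1 * (t - s)^2" by (simp add: power2_eq_square algebra_simps)
      also have "\<dots> = (t - s) * (\<omega> t - \<omega> s) + 1 * (t - s)^2" using MD by simp
      finally show ?thesis by (simp add: I_def)
    qed
  qed
  moreover have "\<Phi> 1 - \<Phi> 0 = F 1 - integral {0..1} F" by (simp add: \<Phi>_def)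
  ultimately show "((\<lambda>t. t * g t) has_integral (F 1 - integral {0..1} F)) {0..1}" by simp
qed

lemma core_ineq:
  fixes F g :: "real \<Rightarrow> real" and \<sigma> :: real
  assumes \<sigma>: "\<sigma> = 1 \<or> \<sigma> = -1"
    and g01: "\<And>t. t \<in> {0..1} \<Longrightarrow> 0 \<le> g t \<and> g t \<le> 1"
    and gmono: "\<And>s t. 0 \<le> s \<Longrightarrow> s \<le> t \<Longrightarrow> t \<le> 1 \<Longrightarrow> \<sigma> * (g t - g s) \<le> 0"
    and sq: "\<And>s t. 0 \<le> s \<Longrightarrow> s < t \<Longrightarrow> t \<le> 1 \<Longrightarrow>
        min (g s) (g t) * (t - s) \<le> F t - F s \<and> F t - F s \<le> max (g s) (g t) * (t - s)"
    and Fc: "continuous_on {0..1} F"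
    and F0: "F 0 = 0"
  shows "integral {0..1} (\<lambda>t. (g t)^2) \<le> (F 1)^2 + \<sigma> * (2 * integral {0..1} F - F 1)"
    and "integral {0..1} (\<lambda>t. (g t)^2) = (F 1)^2 + \<sigma> * (2 * integral {0..1} F - F 1) \<Longrightarrow>
         integral {0..1} (\<lambda>t. (g t)^2) = (F 1)^2 \<or> integral {0..1} (\<lambda>t. (g t)^2) = F 1"
proof -
  define v where "v = F 1"
  define A where "A = integral {0..1} (\<lambda>t. (g t)^2)"
  define B where "B = integral {0..1} F"
  note ftc = ftc_sq_ftc[OF \<sigma> g01 gmono sq Fc]
  have G0: "(g has_integral F t) {0..t}" if "t \<in> {0..1}" for t
    using ftc[of 0 t] that F0 by auto
  have G1: "(g has_integral v - F t) {t..1}" if "t \<in> {0..1}" for t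
    using ftc[of t 1] that by (auto simp: v_def)
  have Gall: "(g has_integral v) {0..1}" using G0[of 1] by (simp add: v_def)
  have TG: "((\<lambda>t. t * g t) has_integral (v - B)) {0..1}"
    using ftc_sq_tg[OF \<sigma> g01 gmono sq Fc] by (simp add: v_def B_def)
  have G2: "((\<lambda>t. (g t)^2) has_integral A) {0..1}"
    using ftc_sq_g2[OF \<sigma> g01 gmono sq Fc] by (simp add: A_def integrable_integral)
  have FB: "(F has_integral B) {0..1}"
    using integrable_continuous_real[OF Fc] by (simp add: B_def integrable_integral)
  have C1: "((\<lambda>s. c) has_integral c) {0..1::real}" for c :: real
    using has_integral_const_real[of c 0 1] by simp
  have C2: "((\<lambda>s. c) has_integral c * t) {0::real..t}" if "0 \<le> t" for c t :: real
    using has_integral_const_real[of c 0 t] that by (simp add: mult.commute)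
  have C3: "((\<lambda>s. c) has_integral c * (1 - t)) {t..1::real}" if "t \<le> 1" for c t :: real
    using has_integral_const_real[of c t 1] that by (simp add: mult.commute)
  define K where "K t = \<sigma> * (2 * F t - v + (1 - 2 * t) * g t) - (A - 2 * g t * v + (g t)^2)" for t
  define \<phi> where "\<phi> t s = \<bar>g s - g t\<bar> * (1 - \<bar>g s - g t\<bar>)" for t s
  have \<phi>int: "(\<phi> t has_integral K t) {0..1}" if t: "t \<in> {0..1}" for t
  proof -
    define c where "c = g t"
    have sq1: "((\<lambda>s. (g s - c)^2) has_integral (A - 2 * c * v + c^2)) {0..1}"
    proof -
      have "((\<lambda>s. (g s)^2 - 2 * c * g s + c^2) has_integral (A - 2 * c * v + c^2)) {0..1}"
        by (intro has_integral_add has_integral_diff G2 has_integral_mult_right Gall C1)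
      then show ?thesis by (simp add: power2_eq_square algebra_simps)
    qed
    have a1: "((\<lambda>s. \<bar>g s - c\<bar>) has_integral \<sigma> * (F t - c * t)) {0..t}"
    proof (rule has_integral_eq[where f="\<lambda>s. \<sigma> * (g s - c)"])
      show "\<sigma> * (g s - c) = \<bar>g s - c\<bar>" if "s \<in> {0..t}" for s
        using gmono[of s t] that t \<sigma> by (auto simp: c_def)
      have "((\<lambda>s. g s - c) has_integral (F t - c * t)) {0..t}"
        by (intro has_integral_diff G0 t C2) (use t in auto)
      then show "((\<lambda>s. \<sigma> * (g s - c)) has_integral \<sigma> * (F t - c * t)) {0..t}"
        using t by (simp add: has_integral_mult_right mult.commute)
    qed
    have a2: "((\<lambda>s. \<bar>g s - c\<bar>) has_integral \<sigma> * (c * (1 - t) - (v - F t))) {t..1}"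
    proof (rule has_integral_eq[where f="\<lambda>s. \<sigma> * (c - g s)"])
      show "\<sigma> * (c - g s) = \<bar>g s - c\<bar>" if "s \<in> {t..1}" for s
        using gmono[of t s] that t \<sigma> by (auto simp: c_def)
      have "((\<lambda>s. c - g s) has_integral (c * (1 - t) - (v - F t))) {t..1}"
        by (intro has_integral_diff G1 t C3) (use t in auto)
      then show "((\<lambda>s. \<sigma> * (c - g s)) has_integral \<sigma> * (c * (1 - t) - (v - F t))) {t..1}"
        using t by (simp add: has_integral_mult_right mult.commute)
    qed
    have a: "((\<lambda>s. \<bar>g s - c\<bar>) has_integral (\<sigma> * (F t - c * t) + \<sigma> * (c * (1 - t) - (v - F t)))) {0..1}"
      by (rule has_integral_combine[OF _ _ a1 a2]) (use t in auto)
    have "((\<lambda>s. \<bar>g s - c\<bar> - (g s - c)^2) has_integral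
        (\<sigma> * (F t - c * t) + \<sigma> * (c * (1 - t) - (v - F t))) - (A - 2 * c * v + c^2)) {0..1}"
      by (rule has_integral_diff[OF a sq1])
    moreover have "\<sigma> * (F t - c * t) + \<sigma> * (c * (1 - t) - (v - F t)) - (A - 2 * c * v + c^2) = K t"
      by (simp add: K_def c_def algebra_simps)
    moreover have "\<bar>g s - c\<bar> - (g s - c)^2 = \<phi> t s" for s
    proof -
      have "\<bar>x\<bar> * (1 - \<bar>x\<bar>) = \<bar>x\<bar> - x^2" for x :: real
        by (simp add: right_diff_distrib power2_eq_square abs_mult_self_eq)
      then show ?thesis by (simp add: \<phi>_def c_def)
    qed
    ultimately show ?thesis by simp
  qed
  have \<phi>nn: "0 \<le> \<phi> t s" if "t \<in> {0..1}" "s \<in> {0..1}" for t s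
    using g01[OF that(1)] g01[OF that(2)] by (auto simp: \<phi>_def abs_le_iff)
  have Knn: "0 \<le> K t" if "t \<in> {0..1}" for t
    using has_integral_nonneg[OF \<phi>int[OF that]] \<phi>nn that by auto
  have Kint: "(K has_integral (\<sigma> * (4 * B - 2 * v) - 2 * A + 2 * v^2)) {0..1}"
  proof -
    have e: "K t = \<sigma> * (2 * F t) - \<sigma> * v + \<sigma> * g t - \<sigma> * 2 * (t * g t) - A + 2 * v * g t - (g t)^2" for t
      by (simp add: K_def algebra_simps)
    have "((\<lambda>t. \<sigma> * (2 * F t) - \<sigma> * v + \<sigma> * g t - \<sigma> * 2 * (t * g t) - A + 2 * v * g t - (g t)^2) has_integral
      (\<sigma> * (2 * B) - \<sigma> * v + \<sigma> * v - \<sigma> * 2 * (v - B) - A + 2 * v * v - A)) {0..1}"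
      by (intro has_integral_add has_integral_diff has_integral_mult_right FB Gall TG G2 C1)
    then show ?thesis unfolding e[abs_def] by (simp add: algebra_simps power2_eq_square)
  qed
  have nn: "0 \<le> \<sigma> * (4 * B - 2 * v) - 2 * A + 2 * v^2"
    using has_integral_nonneg[OF Kint] Knn by auto
  show "integral {0..1} (\<lambda>t. (g t)^2) \<le> (F 1)^2 + \<sigma> * (2 * integral {0..1} F - F 1)"
    using nn by (simp add: A_def B_def v_def algebra_simps)
  assume eq: "integral {0..1} (\<lambda>t. (g t)^2) = (F 1)^2 + \<sigma> * (2 * integral {0..1} F - F 1)"
  then have "\<sigma> * (4 * B - 2 * v) - 2 * A + 2 * v^2 = 0" by (simp add: A_def B_def v_def algebra_simps)
  then have K0: "(K has_integral 0) {0..1}" using Kint by simp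
  have negK: "negligible {t \<in> {0..1}. K t \<noteq> 0}"
    by (rule integral0_negligible[OF K0]) (use Knn in auto)
  obtain t0 where t0: "t0 \<in> {0..1}" "K t0 = 0"
  proof (rule ccontr)
    assume "\<not> thesis"
    note nt = this
    have "{0<..<1::real} \<subseteq> {t \<in> {0..1}. K t \<noteq> 0}"
    proof
      fix x :: real assume x: "x \<in> {0<..<1}"
      show "x \<in> {t \<in> {0..1}. K t \<noteq> 0}"
      proof (cases "K x = 0")
        case True then have thesis using that[of x] x by auto
        then show ?thesis using nt by simp
      qed (use x in auto)
    qed
    then have "negligible {0<..<1::real}" using negK negligible_subset by blast
    moreover have "\<not> negligible {0<..<1::real}" by (rule open_not_negligible) auto
    ultimately show False by simp
  qed
  define c where "c = g t0"
  have c01: "0 \<le> c" "c \<le> 1" using g01[OF t0(1)] by (auto simp: c_def)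
  have negZ: "negligible {s \<in> {0..1}. \<phi> t0 s \<noteq> 0}"
    by (rule integral0_negligible) (use \<phi>int[OF t0(1)] t0(2) \<phi>nn t0(1) in auto)
  define Z where "Z = {s \<in> {0..1}. \<phi> t0 s \<noteq> 0}"
  have Zs: "\<bar>g s - c\<bar> = 0 \<or> \<bar>g s - c\<bar> = 1" if "s \<in> {0..1} - Z" for s
    using that by (auto simp: Z_def \<phi>_def c_def)
  show "integral {0..1} (\<lambda>t. (g t)^2) = (F 1)^2 \<or> integral {0..1} (\<lambda>t. (g t)^2) = F 1"
  proof (cases "0 < c \<and> c < 1")
    case True
    have gc: "g s = c" if "s \<in> {0..1} - Z" for s
      using Zs[OF that] g01[of s] that True by (auto simp: abs_if split: if_splits)
    have "((\<lambda>s. c) has_integral c) {0..1::real}" by (rule C1)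
    then have "(g has_integral c) {0..1}"
      by (rule has_integral_spike[OF negZ[folded Z_def], rotated]) (use gc in auto)
    then have vc: "v = c" using Gall has_integral_unique by blast
    have "((\<lambda>s. c^2) has_integral c^2) {0..1::real}" by (rule C1)
    then have "((\<lambda>t. (g t)^2) has_integral c^2) {0..1}"
      by (rule has_integral_spike[OF negZ[folded Z_def], rotated]) (use gc in auto)
    then have "A = c^2" using G2 has_integral_unique by blast
    then show ?thesis using vc by (simp add: A_def v_def)
  next
    case False
    then have "c = 0 \<or> c = 1" using c01 by auto
    then have g01': "g s = 0 \<or> g s = 1" if "s \<in> {0..1} - Z" for s
      using Zs[OF that] g01[of s] that by (auto simp: abs_if split: if_splits)
    have "((\<lambda>t. (g t)^2) has_integral v) {0..1}"
      by (rule has_integral_spike[OF negZ[folded Z_def], rotated, OF Gall]) (use g01' in force)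
    then have "A = v" using G2 has_integral_unique by blast
    then show ?thesis by (simp add: A_def v_def)
  qed
qed

lemma cop_u:
  assumes cop: "copula C" and u: "0 \<le> u1" "u1 \<le> u2" "u2 \<le> 1" and v: "0 \<le> v" "v \<le> 1"
  shows "0 \<le> C u2 v - C u1 v \<and> C u2 v - C u1 v \<le> u2 - u1"
proof -
  have b: "\<forall>u\<in>{0..1}. C u 0 = 0 \<and> C 0 u = 0 \<and> C u 1 = u \<and> C 1 u = u"
    and r: "\<And>a b c d. a \<in> {0..1} \<Longrightarrow> b \<in> {0..1} \<Longrightarrow> c \<in> {0..1} \<Longrightarrow> d \<in> {0..1} \<Longrightarrow> a \<le> b \<Longrightarrow> c \<le> d
      \<Longrightarrow> C b d - C b c - C a d + C a c \<ge> 0"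
    using cop unfolding copula_def by blast+
  have 1: "C u2 v - C u2 0 - C u1 v + C u1 0 \<ge> 0" using r[of u1 u2 0 v] u v by auto
  have 2: "C u2 1 - C u2 v - C u1 1 + C u1 v \<ge> 0" using r[of u1 u2 v 1] u v by auto
  show ?thesis using 1 2 b u by auto
qed

lemma cop_v:
  assumes cop: "copula C" and u: "0 \<le> v1" "v1 \<le> v2" "v2 \<le> 1" and v: "0 \<le> u" "u \<le> 1"
  shows "0 \<le> C u v2 - C u v1 \<and> C u v2 - C u v1 \<le> v2 - v1"
proof -
  have b: "\<forall>u\<in>{0..1}. C u 0 = 0 \<and> C 0 u = 0 \<and> C u 1 = u \<and> C 1 u = u"
    and r: "\<And>a b c d. a \<in> {0..1} \<Longrightarrow> b \<in> {0..1} \<Longrightarrow> c \<in> {0..1} \<Longrightarrow> d \<in> {0..1} \<Longrightarrow> a \<le> b \<Longrightarrow> c \<le> d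
      \<Longrightarrow> C b d - C b c - C a d + C a c \<ge> 0"
    using cop unfolding copula_def by blast+
  have 1: "C u v2 - C u v1 - C 0 v2 + C 0 v1 \<ge> 0" using r[of 0 u v1 v2] u v by auto
  have 2: "C 1 v2 - C 1 v1 - C u v2 + C u v1 \<ge> 0" using r[of u 1 v1 v2] u v by auto
  show ?thesis using 1 2 b u by auto
qed

lemma cop_lip_u:
  assumes cop: "copula C" and "a \<in> {0..1}" "b \<in> {0..1}" "v \<in> {0..1}"
  shows "\<bar>C a v - C b v\<bar> \<le> \<bar>a - b\<bar>"
  using cop_u[OF cop, of a b v] cop_u[OF cop, of b a v] assms by (cases "a \<le> b") auto

lemma cop_lip_v:
  assumes cop: "copula C" and "a \<in> {0..1}" "b \<in> {0..1}" "u \<in> {0..1}"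
  shows "\<bar>C u a - C u b\<bar> \<le> \<bar>a - b\<bar>"
  using cop_v[OF cop, of a b u] cop_v[OF cop, of b a u] assms by (cases "a \<le> b") auto

lemma cop_bounds:
  assumes cop: "copula C" and "u \<in> {0..1}" "v \<in> {0..1}"
  shows "max (u + v - 1) 0 \<le> C u v \<and> C u v \<le> min u v"
proof -
  have b: "\<forall>u\<in>{0..1}. C u 0 = 0 \<and> C 0 u = 0 \<and> C u 1 = u \<and> C 1 u = u"
    using cop unfolding copula_def by blast
  have 1: "0 \<le> C u 1 - C u v \<and> C u 1 - C u v \<le> 1 - v" using cop_v[OF cop, of v 1 u] assms by auto
  have 2: "0 \<le> C 1 v - C u v" using cop_u[OF cop, of u 1 v] assms by auto
  have 3: "0 \<le> C u v - C 0 v" using cop_u[OF cop, of 0 u v] assms by auto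
  show ?thesis using 1 2 3 b assms by auto
qed

lemma lip1_cont:
  fixes f :: "real \<Rightarrow> real"
  assumes "\<And>x y. x \<in> S \<Longrightarrow> y \<in> S \<Longrightarrow> \<bar>f x - f y\<bar> \<le> \<bar>x - y\<bar>"
  shows "continuous_on S f"
  unfolding continuous_on_iff
proof (intro ballI allI impI)
  fix x e assume x: "x \<in> S" and e: "(0::real) < e"
  show "\<exists>d>0. \<forall>x'\<in>S. dist x' x < d \<longrightarrow> dist (f x') (f x) < e"
    using assms x e by (intro exI[of _ e]) (auto simp: dist_real_def intro: le_less_trans)
qed

lemma cop_cont2:
  assumes cop: "copula C"
  shows "continuous_on (cbox (0::real, 0::real) (1, 1)) (\<lambda>(u, v). C u v)"
  unfolding continuous_on_iff
proof (intro ballI allI impI)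
  fix x :: "real \<times> real" and e :: real assume x: "x \<in> cbox (0, 0) (1, 1)" and e: "0 < e"
  show "\<exists>d>0. \<forall>x'\<in>cbox (0, 0) (1, 1). dist x' x < d \<longrightarrow> dist ((\<lambda>(u, v). C u v) x') ((\<lambda>(u, v). C u v) x) < e"
  proof (intro exI[of _ "e/2"] conjI ballI impI)
    show "0 < e / 2" using e by simp
    fix y :: "real \<times> real" assume y: "y \<in> cbox (0, 0) (1, 1)" and d: "dist y x < e / 2"
    obtain a b where yab: "y = (a, b)" by (cases y)
    obtain c d where xcd: "x = (c, d)" by (cases x)
    have ab: "a \<in> {0..1}" "b \<in> {0..1}" using y yab by (auto simp: cbox_Pair_eq)
    have cd: "c \<in> {0..1}" "d \<in> {0..1}" using x xcd by (auto simp: cbox_Pair_eq)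
    have 1: "\<bar>a - c\<bar> < e / 2" using dist_fst_le[of y x] d by (simp add: yab xcd dist_real_def)
    have 2: "\<bar>b - d\<bar> < e / 2" using dist_snd_le[of y x] d by (simp add: yab xcd dist_real_def)
    have "\<bar>C a b - C c d\<bar> \<le> \<bar>C a b - C c b\<bar> + \<bar>C c b - C c d\<bar>" by linarith
    also have "\<dots> \<le> \<bar>a - c\<bar> + \<bar>b - d\<bar>"
      using cop_lip_u[OF cop ab(1) cd(1) ab(2)] cop_lip_v[OF cop ab(2) cd(2) cd(1)] by linarith
    finally show "dist ((\<lambda>(u, v). C u v) y) ((\<lambda>(u, v). C u v) x) < e"
      using 1 2 by (simp add: yab xcd dist_real_def)
  qed
qed

lemma per_v_setup:
  assumes cop: "copula C" and v: "v \<in> {0..1}"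
    and sc: "(\<sigma> = 1 \<and> concave_on {0..1} (\<lambda>u. C u v)) \<or> (\<sigma> = -1 \<and> convex_on {0..1} (\<lambda>u. C u v))"
  obtains g N where
    "\<And>t. t \<in> {0..1} \<Longrightarrow> 0 \<le> g t \<and> g t \<le> 1"
    "\<And>s t. 0 \<le> s \<Longrightarrow> s \<le> t \<Longrightarrow> t \<le> 1 \<Longrightarrow> \<sigma> * (g t - g s) \<le> 0"
    "\<And>s t. 0 \<le> s \<Longrightarrow> s < t \<Longrightarrow> t \<le> 1 \<Longrightarrow>
        min (g s) (g t) * (t - s) \<le> C t v - C s v \<and> C t v - C s v \<le> max (g s) (g t) * (t - s)"
    "negligible N" "\<And>t. t \<in> {0..1} - N \<Longrightarrow> d1 C t v = g t"
proof -
  define F where "F u = C u v" for u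
  have Feq: "F = (\<lambda>u. C u v)" by (rule ext) (simp add: F_def)
  have lip: "0 \<le> F t - F s \<and> F t - F s \<le> t - s" if "0 \<le> s" "s \<le> t" "t \<le> 1" for s t
    using cop_u[OF cop, of s t v] that v by (auto simp: F_def)
  have d1eq: "d1 C t v = D" if "(F has_real_derivative D) (at t)" for t D
  proof -
    have "(\<lambda>s. C s v) differentiable (at t)"
      using differentiableI[OF has_field_derivative_imp_has_derivative[OF that]] unfolding F_def .
    moreover have "deriv (\<lambda>s. C s v) t = D" using that unfolding F_def by (rule DERIV_imp_deriv)
    ultimately show ?thesis by (simp add: d1_def)
  qed
  from sc show ?thesis
  proof
    assume a: "\<sigma> = 1 \<and> concave_on {0..1} (\<lambda>u. C u v)"
    then have conc: "concave_on {0..1} F" by (simp add: Feq)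
    show ?thesis
    proof (rule concave_slope_fun[OF conc lip])
    fix S g assume gS: "countable S" "\<And>t. t \<in> {0..1} \<Longrightarrow> 0 \<le> g t \<and> g t \<le> 1"
      "\<And>s t. 0 \<le> s \<Longrightarrow> s < t \<Longrightarrow> t \<le> 1 \<Longrightarrow> g t * (t - s) \<le> F t - F s \<and> F t - F s \<le> g s * (t - s)"
      "\<And>t. t \<in> {0<..<1} - S \<Longrightarrow> (F has_real_derivative g t) (at t)"
    have mono: "\<sigma> * (g t - g s) \<le> 0" if "0 \<le> s" "s \<le> t" "t \<le> 1" for s t
    proof (cases "s = t")
      case False
      then have "s < t" using that by simp
      have "g t * (t - s) \<le> g s * (t - s)" using gS(3)[OF that(1) \<open>s < t\<close> that(3)] by linarith
      then show ?thesis using a \<open>s < t\<close> by simp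
    qed simp
    show ?thesis
    proof (rule that[of g "S \<union> {0, 1}"])
      show "\<And>t. t \<in> {0..1} \<Longrightarrow> 0 \<le> g t \<and> g t \<le> 1" by (rule gS(2))
      show "\<And>s t. 0 \<le> s \<Longrightarrow> s \<le> t \<Longrightarrow> t \<le> 1 \<Longrightarrow> \<sigma> * (g t - g s) \<le> 0" by (rule mono)
      show "min (g s) (g t) * (t - s) \<le> C t v - C s v \<and> C t v - C s v \<le> max (g s) (g t) * (t - s)"
        if "0 \<le> s" "s < t" "t \<le> 1" for s t
      proof -
        have "g t \<le> g s" using mono[of s t] that a by simp
        then show ?thesis using gS(3)[OF that] by (simp add: F_def min_def max_def)
      qed
      show "negligible (S \<union> {0, 1})" using countable_negligible[OF gS(1)] by simp
      show "d1 C t v = g t" if "t \<in> {0..1} - (S \<union> {0, 1})" for t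
        using that by (intro d1eq gS(4)) auto
    qed
    qed
  next
    assume a: "\<sigma> = -1 \<and> convex_on {0..1} (\<lambda>u. C u v)"
    define G where "G u = u - F u" for u
    have conc: "concave_on {0..1} G"
      unfolding G_def using a by (intro concave_on_diff) (auto simp: Feq concave_on_ident)
    have lipG: "0 \<le> G t - G s \<and> G t - G s \<le> t - s" if "0 \<le> s" "s \<le> t" "t \<le> 1" for s t
      using lip[OF that] by (auto simp: G_def)
    show ?thesis
    proof (rule concave_slope_fun[OF conc lipG])
    fix S h assume hS: "countable S" "\<And>t. t \<in> {0..1} \<Longrightarrow> 0 \<le> h t \<and> h t \<le> 1"
      "\<And>s t. 0 \<le> s \<Longrightarrow> s < t \<Longrightarrow> t \<le> 1 \<Longrightarrow> h t * (t - s) \<le> G t - G s \<and> G t - G s \<le> h s * (t - s)"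
      "\<And>t. t \<in> {0<..<1} - S \<Longrightarrow> (G has_real_derivative h t) (at t)"
    define g where "g t = 1 - h t" for t
    have mono: "\<sigma> * (g t - g s) \<le> 0" if "0 \<le> s" "s \<le> t" "t \<le> 1" for s t
    proof (cases "s = t")
      case False
      then have "s < t" using that by simp
      have "h t * (t - s) \<le> h s * (t - s)" using hS(3)[OF that(1) \<open>s < t\<close> that(3)] by linarith
      then show ?thesis using a \<open>s < t\<close> by (simp add: g_def)
    qed simp
    show ?thesis
    proof (rule that[of g "S \<union> {0, 1}"])
      show "\<And>t. t \<in> {0..1} \<Longrightarrow> 0 \<le> g t \<and> g t \<le> 1" using hS(2) by (auto simp: g_def)
      show "\<And>s t. 0 \<le> s \<Longrightarrow> s \<le> t \<Longrightarrow> t \<le> 1 \<Longrightarrow> \<sigma> * (g t - g s) \<le> 0" by (rule mono)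
      show "min (g s) (g t) * (t - s) \<le> C t v - C s v \<and> C t v - C s v \<le> max (g s) (g t) * (t - s)"
        if "0 \<le> s" "s < t" "t \<le> 1" for s t
      proof -
        have "g s \<le> g t" using mono[of s t] that a by simp
        moreover have "C t v - C s v = (t - s) - (G t - G s)" by (simp add: G_def F_def)
        moreover have "(1 - h s) * (t - s) = (t - s) - h s * (t - s)" "(1 - h t) * (t - s) = (t - s) - h t * (t - s)"
          by (simp_all add: algebra_simps)
        ultimately show ?thesis using hS(3)[OF that] by (simp add: g_def min_def max_def)
      qed
      show "negligible (S \<union> {0, 1})" using countable_negligible[OF hS(1)] by simp
      show "d1 C t v = g t" if t: "t \<in> {0..1} - (S \<union> {0, 1})" for t
      proof (rule d1eq)
        have "((\<lambda>u. u - G u) has_real_derivative 1 - h t) (at t)"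
          using t by (intro derivative_intros hS(4)) auto
        moreover have "(\<lambda>u. u - G u) = F" by (rule ext) (simp add: G_def)
        ultimately show "(F has_real_derivative g t) (at t)" by (simp add: g_def)
      qed
    qed
    qed
  qed
qed

lemma slope_const:
  fixes F g :: "real \<Rightarrow> real" and \<sigma> :: real
  assumes \<sigma>: "\<sigma> = 1 \<or> \<sigma> = -1"
    and gmono: "\<And>s t. 0 \<le> s \<Longrightarrow> s \<le> t \<Longrightarrow> t \<le> 1 \<Longrightarrow> \<sigma> * (g t - g s) \<le> 0"
    and sq: "\<And>s t. 0 \<le> s \<Longrightarrow> s < t \<Longrightarrow> t \<le> 1 \<Longrightarrow>
        min (g s) (g t) * (t - s) \<le> F t - F s \<and> F t - F s \<le> max (g s) (g t) * (t - s)"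
    and ab: "0 \<le> a" "b \<le> 1"
    and lin: "\<And>x y. a \<le> x \<Longrightarrow> x \<le> y \<Longrightarrow> y \<le> b \<Longrightarrow> F y - F x = k * (y - x)"
    and t: "t \<in> {a<..<b}"
  shows "g t = k"
proof -
  define s where "s = (a + t) / 2"
  define r where "r = (t + b) / 2"
  have o: "a \<le> s" "s < t" "t < r" "r \<le> b" using t by (auto simp: s_def r_def)
  have "min (g s) (g t) * (t - s) \<le> k * (t - s) \<and> k * (t - s) \<le> max (g s) (g t) * (t - s)"
    using sq[of s t] lin[of s t] o ab by auto
  then have 1: "min (g s) (g t) \<le> k" "k \<le> max (g s) (g t)" using o by (auto simp: mult_le_cancel_right)
  have "min (g t) (g r) * (r - t) \<le> k * (r - t) \<and> k * (r - t) \<le> max (g t) (g r) * (r - t)"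
    using sq[of t r] lin[of t r] o ab by auto
  then have 2: "min (g t) (g r) \<le> k" "k \<le> max (g t) (g r)" using o by (auto simp: mult_le_cancel_right)
  have m1: "\<sigma> * (g t - g s) \<le> 0" using gmono[of s t] o ab by auto
  have m2: "\<sigma> * (g r - g t) \<le> 0" using gmono[of t r] o ab by auto
  show ?thesis using \<sigma> m1 m2 1 2 by (auto simp: min_def max_def split: if_splits)
qed

lemma int_uv: "((\<lambda>u. u * v) has_integral v / 2) {0..1::real}"
proof -
  have "((\<lambda>u. u * v) has_integral (1^2 * v / 2 - 0^2 * v / 2)) {0..1::real}"
    by (rule fundamental_theorem_of_calculus)
       (auto intro!: derivative_eq_intros simp: has_real_derivative_iff_has_vector_derivative[symmetric])
  then show ?thesis by simp
qed

lemma int_id: "a \<le> b \<Longrightarrow> ((\<lambda>u. u) has_integral (b^2 / 2 - a^2 / 2)) {a..b::real}"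
  by (rule fundamental_theorem_of_calculus)
     (auto intro!: derivative_eq_intros simp: has_real_derivative_iff_has_vector_derivative[symmetric])

lemma int_M: assumes "v \<in> {0..1}" shows "((\<lambda>u. min u v) has_integral (v - v^2 / 2)) {0..1::real}"
proof -
  have 1: "((\<lambda>u. min u v) has_integral (v^2 / 2 - 0^2 / 2)) {0..v}"
    by (rule has_integral_eq[OF _ int_id]) (use assms in auto)
  have 2: "((\<lambda>u. min u v) has_integral (v * (1 - v))) {v..1}"
    by (rule has_integral_eq[where f="\<lambda>u. v"]) (use assms has_integral_const_real[of v v 1] in \<open>auto simp: mult.commute\<close>)
  have "((\<lambda>u. min u v) has_integral (v^2 / 2 - 0^2 / 2) + v * (1 - v)) {0..1}"
    by (rule has_integral_combine[OF _ _ 1 2]) (use assms in auto)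
  then show ?thesis by (simp add: algebra_simps power2_eq_square)
qed

lemma int_W: assumes "v \<in> {0..1}" shows "((\<lambda>u. max (u + v - 1) 0) has_integral (v^2 / 2)) {0..1::real}"
proof -
  have 1: "((\<lambda>u. max (u + v - 1) 0) has_integral 0) {0..1-v}"
    by (rule has_integral_eq[where f="\<lambda>u. 0"]) (use assms in auto)
  have h: "((\<lambda>u. u - (1 - v)) has_integral ((1^2 / 2 - (1-v)^2 / 2) - (1 - v) * (1 - (1 - v)))) {1-v..1}"
    by (intro has_integral_diff int_id) (use assms has_integral_const_real[of "1-v" "1-v" 1] in \<open>auto simp: mult.commute\<close>)
  have val: "(1^2 / 2 - (1-v)^2 / 2) - (1 - v) * (1 - (1 - v)) = v^2 / (2::real)"
    by (simp add: field_simps power2_eq_square)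
  have "((\<lambda>u. u - (1 - v)) has_integral (v^2 / 2)) {1-v..1}" using h unfolding val .
  then have 2: "((\<lambda>u. max (u + v - 1) 0) has_integral (v^2 / 2)) {1-v..1}"
    by (rule has_integral_eq[rotated]) auto
  have "((\<lambda>u. max (u + v - 1) 0) has_integral 0 + v^2 / 2) {0..1}"
    by (rule has_integral_combine[OF _ _ 1 2]) (use assms in auto)
  then show ?thesis by simp
qed

lemma zero_from_int:
  fixes H :: "real \<Rightarrow> real"
  assumes "continuous_on {0..1} H" "\<And>u. u \<in> {0..1} \<Longrightarrow> 0 \<le> H u" "(H has_integral 0) {0..1}" "u \<in> {0..1}"
  shows "H u = 0"
proof -
  have "integral {0..1} H = 0" using assms(3) by (simp add: integral_unique)
  then show ?thesis using integral_eq_0_iff[of 0 1 H] assms by auto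
qed

lemma zero_from_int2:
  fixes H :: "real \<Rightarrow> real"
  assumes "continuous_on {0..1} H" "\<And>u. u \<in> {0..1} \<Longrightarrow> 0 \<le> H u" "(H has_integral 0) {0..1}"
  shows "\<forall>u\<in>{0..1}. H u = 0"
  using zero_from_int[OF assms] by blast

lemma per_v:
  assumes cop: "copula C" and v: "v \<in> {0..1}"
    and sc: "(\<sigma> = 1 \<and> concave_on {0..1} (\<lambda>u. C u v)) \<or> (\<sigma> = -1 \<and> convex_on {0..1} (\<lambda>u. C u v))"
  shows "integral {0..1} (\<lambda>t. (d1 C t v)^2) \<le> v^2 + \<sigma> * (2 * integral {0..1} (\<lambda>u. C u v) - v)
    \<and> (integral {0..1} (\<lambda>t. (d1 C t v)^2) = v^2 + \<sigma> * (2 * integral {0..1} (\<lambda>u. C u v) - v) \<longrightarrow>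
        (\<forall>u\<in>{0..1}. C u v = u * v) \<or> (\<forall>u\<in>{0..1}. C u v = min u v) \<or> (\<forall>u\<in>{0..1}. C u v = max (u + v - 1) 0))
    \<and> ((\<forall>u\<in>{0..1}. C u v = u * v) \<longrightarrow> integral {0..1} (\<lambda>t. (d1 C t v)^2) = v^2)
    \<and> ((\<forall>u\<in>{0..1}. C u v = min u v) \<or> (\<forall>u\<in>{0..1}. C u v = max (u + v - 1) 0) \<longrightarrow>
        integral {0..1} (\<lambda>t. (d1 C t v)^2) = v)"
proof (rule per_v_setup[OF cop v sc])
  fix N g
  assume g01: "\<And>t. t \<in> {0..1} \<Longrightarrow> 0 \<le> g t \<and> g t \<le> 1"
    and gmono: "\<And>s t. 0 \<le> s \<Longrightarrow> s \<le> t \<Longrightarrow> t \<le> 1 \<Longrightarrow> \<sigma> * (g t - g s) \<le> 0"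
    and sq: "\<And>s t. 0 \<le> s \<Longrightarrow> s < t \<Longrightarrow> t \<le> 1 \<Longrightarrow>
        min (g s) (g t) * (t - s) \<le> C t v - C s v \<and> C t v - C s v \<le> max (g s) (g t) * (t - s)"
    and negN: "negligible N" and d1g: "\<And>t. t \<in> {0..1} - N \<Longrightarrow> d1 C t v = g t"
  have \<sigma>: "\<sigma> = 1 \<or> \<sigma> = -1" using sc by auto
  have bd: "\<forall>u\<in>{0..1}. C u 0 = 0 \<and> C 0 u = 0 \<and> C u 1 = u \<and> C 1 u = u"
    using cop unfolding copula_def by blast
  have F0: "C 0 v = 0" and F1: "C 1 v = v" using bd v by auto
  have Fc: "continuous_on {0..1} (\<lambda>u. C u v)"
    by (rule lip1_cont) (use cop_lip_u[OF cop] v in auto)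
  define A where "A = integral {0..1} (\<lambda>t. (g t)^2)"
  define B where "B = integral {0..1} (\<lambda>u. C u v)"
  have Aeq: "integral {0..1} (\<lambda>t. (d1 C t v)^2) = A"
    unfolding A_def by (rule integral_spike[OF negN]) (use d1g in auto)
  note core = core_ineq[where F="\<lambda>u. C u v", OF \<sigma> g01 gmono sq Fc F0]
  have ineq: "A \<le> v^2 + \<sigma> * (2 * B - v)" using core(1) by (simp add: A_def B_def F1)
  have Bint: "((\<lambda>u. C u v) has_integral B) {0..1}"
    using integrable_continuous_real[OF Fc] by (simp add: B_def integrable_integral)
  have eqcase: "(\<forall>u\<in>{0..1}. C u v = u * v) \<or> (\<forall>u\<in>{0..1}. C u v = min u v) \<or> (\<forall>u\<in>{0..1}. C u v = max (u + v - 1) 0)"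
    if eq: "A = v^2 + \<sigma> * (2 * B - v)"
  proof -
    have Av: "A = v^2 \<or> A = v" using core(2) eq by (simp add: A_def B_def F1)
    have uvc: "continuous_on {0..1} (\<lambda>u. u * v)" by (intro continuous_intros)
    have Mc: "continuous_on {0..1} (\<lambda>u. min u v)" by (intro continuous_intros)
    have Wc: "continuous_on {0..1} (\<lambda>u. max (u + v - 1) 0)" by (intro continuous_intros)
    from Av show ?thesis
    proof
      assume a: "A = v^2"
      then have B2: "B = v / 2" using eq \<sigma> by auto
      from sc show ?thesis
      proof
        assume c: "\<sigma> = 1 \<and> concave_on {0..1} (\<lambda>u. C u v)"
        have nn: "0 \<le> C u v - u * v" if "u \<in> {0..1}" for u
          using concave_onD[OF conjunct2[OF c], of u 0 1] that F0 F1 by (auto simp: algebra_simps)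
        have "((\<lambda>u. C u v - u * v) has_integral B - v / 2) {0..1}"
          by (rule has_integral_diff[OF Bint int_uv])
        then have hi: "((\<lambda>u. C u v - u * v) has_integral 0) {0..1}" using B2 by simp
        have cH: "continuous_on {0..1} (\<lambda>u. C u v - u * v)" by (intro continuous_intros Fc)
        have "\<forall>u\<in>{0..1}. C u v - u * v = 0"
          using zero_from_int2[where H="\<lambda>u. C u v - u * v", OF cH nn hi] .
        then show ?thesis by auto
      next
        assume c: "\<sigma> = -1 \<and> convex_on {0..1} (\<lambda>u. C u v)"
        have nn: "0 \<le> u * v - C u v" if "u \<in> {0..1}" for u
          using convex_onD[OF conjunct2[OF c], of u 0 1] that F0 F1 by (auto simp: algebra_simps)
        have "((\<lambda>u. u * v - C u v) has_integral v / 2 - B) {0..1}"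
          by (rule has_integral_diff[OF int_uv Bint])
        then have hi: "((\<lambda>u. u * v - C u v) has_integral 0) {0..1}" using B2 by simp
        have cH: "continuous_on {0..1} (\<lambda>u. u * v - C u v)" by (intro continuous_intros Fc)
        have "\<forall>u\<in>{0..1}. u * v - C u v = 0"
          using zero_from_int2[where H="\<lambda>u. u * v - C u v", OF cH nn hi] .
        then show ?thesis by auto
      qed
    next
      assume a: "A = v"
      from sc show ?thesis
      proof
        assume c: "\<sigma> = 1 \<and> concave_on {0..1} (\<lambda>u. C u v)"
        have B2: "B = v - v^2 / 2" using eq a c by (simp add: algebra_simps)
        have nn: "0 \<le> min u v - C u v" if "u \<in> {0..1}" for u
          using cop_bounds[OF cop that v] by simp
        have "((\<lambda>u. min u v - C u v) has_integral (v - v^2 / 2) - B) {0..1}"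
          by (rule has_integral_diff[OF int_M[OF v] Bint])
        then have hi: "((\<lambda>u. min u v - C u v) has_integral 0) {0..1}" using B2 by simp
        have cH: "continuous_on {0..1} (\<lambda>u. min u v - C u v)" by (intro continuous_intros Fc)
        have "\<forall>u\<in>{0..1}. min u v - C u v = 0"
          using zero_from_int2[where H="\<lambda>u. min u v - C u v", OF cH nn hi] .
        then show ?thesis by auto
      next
        assume c: "\<sigma> = -1 \<and> convex_on {0..1} (\<lambda>u. C u v)"
        have B2: "B = v^2 / 2" using eq a c by (simp add: algebra_simps)
        have nn: "0 \<le> C u v - max (u + v - 1) 0" if "u \<in> {0..1}" for u
          using cop_bounds[OF cop that v] by simp
        have "((\<lambda>u. C u v - max (u + v - 1) 0) has_integral B - v^2 / 2) {0..1}"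
          by (rule has_integral_diff[OF Bint int_W[OF v]])
        then have hi: "((\<lambda>u. C u v - max (u + v - 1) 0) has_integral 0) {0..1}" using B2 by simp
        have cH: "continuous_on {0..1} (\<lambda>u. C u v - max (u + v - 1) 0)" by (intro continuous_intros Fc)
        have "\<forall>u\<in>{0..1}. C u v - max (u + v - 1) 0 = 0"
          using zero_from_int2[where H="\<lambda>u. C u v - max (u + v - 1) 0", OF cH nn hi] .
        then show ?thesis by auto
      qed
    qed
  qed
  have PiA: "A = v^2" if P: "\<forall>u\<in>{0..1}. C u v = u * v"
  proof -
    have gv: "g t = v" if "t \<in> {0<..<1}" for t
      by (rule slope_const[where F="\<lambda>u. C u v", OF \<sigma> gmono sq _ _ _ that, where k="v"])
         (use P in \<open>auto simp: algebra_simps\<close>)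
    have "((\<lambda>t. (g t)^2) has_integral v^2) {0..1}"
      by (rule has_integral_spike[where S="{0,1}" and f="\<lambda>t. v^2"]) (use gv has_integral_const_real[of "v^2" 0 1] in auto)
    then show ?thesis by (simp add: A_def integral_unique)
  qed
  have MWA: "A = v" if P: "(\<forall>u\<in>{0..1}. C u v = min u v) \<or> (\<forall>u\<in>{0..1}. C u v = max (u + v - 1) 0)"
  proof -
    obtain p where p: "\<And>t. t \<in> {0<..<1} - {p} \<Longrightarrow> g t = 0 \<or> g t = 1"
    proof (cases "\<forall>u\<in>{0..1}. C u v = min u v")
      case True
      have 1: "g t = 1" if "t \<in> {0<..<v}" for t
        by (rule slope_const[where F="\<lambda>u. C u v", OF \<sigma> gmono sq _ _ _ that, where k="1"])
           (use True v in \<open>auto simp: algebra_simps\<close>)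
      have 0: "g t = 0" if "t \<in> {v<..<1}" for t
        by (rule slope_const[where F="\<lambda>u. C u v", OF \<sigma> gmono sq _ _ _ that, where k="0"])
           (use True v in \<open>auto simp: algebra_simps\<close>)
      show ?thesis
      proof (rule that[of v])
        fix t assume t: "t \<in> {0<..<1} - {v}"
        then have "t < v \<or> v < t" by auto
        then show "g t = 0 \<or> g t = 1" using 0 1 t by auto
      qed
    next
      case False
      then have W: "\<forall>u\<in>{0..1}. C u v = max (u + v - 1) 0" using P by auto
      have 0: "g t = 0" if "t \<in> {0<..<1-v}" for t
        by (rule slope_const[where F="\<lambda>u. C u v", OF \<sigma> gmono sq _ _ _ that, where k="0"])
           (use W v in \<open>auto simp: algebra_simps\<close>)
      have 1: "g t = 1" if "t \<in> {1-v<..<1}" for t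
        by (rule slope_const[where F="\<lambda>u. C u v", OF \<sigma> gmono sq _ _ _ that, where k="1"])
           (use W v in \<open>auto simp: algebra_simps\<close>)
      show ?thesis
      proof (rule that[of "1 - v"])
        fix t assume t: "t \<in> {0<..<1} - {1 - v}"
        then have "t < 1 - v \<or> 1 - v < t" by auto
        then show "g t = 0 \<or> g t = 1" using 0 1 t by auto
      qed
    qed
    have G: "(g has_integral v) {0..1}"
      using ftc_sq_ftc[where F="\<lambda>u. C u v", OF \<sigma> g01 gmono sq Fc, of 0 1] F0 F1 by simp
    have "((\<lambda>t. (g t)^2) has_integral v) {0..1}"
      by (rule has_integral_spike[where S="{0,p,1}", OF _ _ G]) (use p in \<open>auto simp: power2_eq_square\<close>)
    then show ?thesis by (simp add: A_def integral_unique)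
  qed
  show ?thesis
    unfolding Aeq B_def[symmetric] using ineq eqcase PiA MWA by blast
qed

lemma good_point:
  assumes "negligible N" "v \<in> {0..1::real}" "e > 0"
  obtains w where "w \<in> {0<..<1} - N" "\<bar>w - v\<bar> < e"
proof -
  define S where "S = ball v e \<inter> {0<..<1::real}"
  define w0 where "w0 = (if v < 1/2 then v + min e (1/2) / 2 else v - min e (1/2) / 2)"
  have "w0 \<in> S" using assms by (auto simp: S_def w0_def dist_real_def min_def)
  then have "\<not> negligible S" by (intro open_not_negligible) (auto simp: S_def)
  then have "\<not> S \<subseteq> N" using assms(1) negligible_subset by blast
  then obtain w where "w \<in> S" "w \<notin> N" by blast
  then show ?thesis using that[of w] by (auto simp: S_def dist_real_def abs_minus_commute)
qed

lemma density_type: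
  fixes C T :: "real \<Rightarrow> real \<Rightarrow> real"
  assumes cop: "copula C" and N: "negligible N"
    and Tlip: "\<And>u v w. u \<in> {0..1} \<Longrightarrow> v \<in> {0..1} \<Longrightarrow> w \<in> {0..1} \<Longrightarrow> \<bar>T u v - T u w\<bar> \<le> \<bar>v - w\<bar>"
    and good: "\<And>w. w \<in> {0<..<1} - N \<Longrightarrow> \<forall>u\<in>{0..1}. C u w = T u w"
  shows "\<forall>u\<in>{0..1}. \<forall>v\<in>{0..1}. C u v = T u v"
proof (intro ballI)
  fix u v :: real assume u: "u \<in> {0..1}" and v: "v \<in> {0..1}"
  have bnd: "\<bar>C u v - T u v\<bar> \<le> 2 * e" if e: "e > 0" for e
  proof -
    obtain w where w: "w \<in> {0<..<1} - N" "\<bar>w - v\<bar> < e" using good_point[OF N v e] by blast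
    have w01: "w \<in> {0..1}" using w by auto
    have "C u w = T u w" using good[OF w(1)] u by auto
    moreover have "\<bar>C u v - C u w\<bar> \<le> \<bar>v - w\<bar>" by (rule cop_lip_v[OF cop v w01 u])
    moreover have "\<bar>T u w - T u v\<bar> \<le> \<bar>w - v\<bar>" by (rule Tlip[OF u w01 v])
    ultimately show ?thesis using w(2) by (simp add: abs_minus_commute)
  qed
  show "C u v = T u v"
  proof (rule ccontr)
    assume "C u v \<noteq> T u v"
    define x where "x = \<bar>C u v - T u v\<bar>"
    have x0: "x > 0" using \<open>C u v \<noteq> T u v\<close> by (simp add: x_def)
    have "x \<le> 2 * (x / 4)" using bnd[of "x / 4"] x0 by (simp add: x_def)
    then show False using x0 by linarith
  qed
qed

lemma cop_D_mono:
  assumes cop: "copula C" and "0 \<le> a" "a \<le> b" "b \<le> 1" "v1 \<in> {0..1}" "v2 \<in> {0..1}" "v1 \<le> v2"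
  shows "C a v2 - C a v1 \<le> C b v2 - C b v1"
proof -
  have r: "\<forall>u1\<in>{0..1}. \<forall>u2\<in>{0..1}. \<forall>v1\<in>{0..1}. \<forall>v2\<in>{0..1}.
        u1 \<le> u2 \<longrightarrow> v1 \<le> v2 \<longrightarrow> C u2 v2 - C u2 v1 - C u1 v2 + C u1 v1 \<ge> 0"
    using cop unfolding copula_def by blast
  have "0 \<le> C b v2 - C b v1 - C a v2 + C a v1"
    using r assms(2-7) by (meson atLeastAtMost_iff order_trans)
  then show ?thesis by simp
qed

lemma excl:
  assumes cop: "copula C" and v: "0 < v1" "v1 < v2" "v2 < 1"
  shows "\<not> ((\<forall>u\<in>{0..1}. C u v1 = min u v1) \<and> (\<forall>u\<in>{0..1}. C u v2 = u * v2))"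
    and "\<not> ((\<forall>u\<in>{0..1}. C u v1 = u * v1) \<and> (\<forall>u\<in>{0..1}. C u v2 = min u v2))"
    and "\<not> ((\<forall>u\<in>{0..1}. C u v1 = max (u + v1 - 1) 0) \<and> (\<forall>u\<in>{0..1}. C u v2 = u * v2))"
    and "\<not> ((\<forall>u\<in>{0..1}. C u v1 = u * v1) \<and> (\<forall>u\<in>{0..1}. C u v2 = max (u + v2 - 1) 0))"
    and "\<not> ((\<forall>u\<in>{0..1}. C u v1 = min u v1) \<and> (\<forall>u\<in>{0..1}. C u v2 = max (u + v2 - 1) 0))"
    and "\<not> ((\<forall>u\<in>{0..1}. C u v1 = max (u + v1 - 1) 0) \<and> (\<forall>u\<in>{0..1}. C u v2 = min u v2))"
proof -
  have D: "C a v2 - C a v1 \<le> C b v2 - C b v1" if "0 \<le> a" "a \<le> b" "b \<le> 1" for a b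
    by (rule cop_D_mono[OF cop that]) (use v in auto)
  have p1: "v1 * v2 < v1" using v by (simp add: mult_strict_left_mono[of v2 1 v1, simplified])
  show "\<not> ((\<forall>u\<in>{0..1}. C u v1 = min u v1) \<and> (\<forall>u\<in>{0..1}. C u v2 = u * v2))"
  proof
    assume h: "(\<forall>u\<in>{0..1}. C u v1 = min u v1) \<and> (\<forall>u\<in>{0..1}. C u v2 = u * v2)"
    have "C 0 v2 - C 0 v1 \<le> C v1 v2 - C v1 v1" using D[of 0 v1] v by simp
    then show False using h v p1 by (simp add: mult.commute)
  qed
  show "\<not> ((\<forall>u\<in>{0..1}. C u v1 = u * v1) \<and> (\<forall>u\<in>{0..1}. C u v2 = min u v2))"
  proof
    assume h: "(\<forall>u\<in>{0..1}. C u v1 = u * v1) \<and> (\<forall>u\<in>{0..1}. C u v2 = min u v2)"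
    have "C v2 v2 - C v2 v1 \<le> C 1 v2 - C 1 v1" using D[of v2 1] v by simp
    then show False using h v p1 by (simp add: mult.commute)
  qed
  show "\<not> ((\<forall>u\<in>{0..1}. C u v1 = max (u + v1 - 1) 0) \<and> (\<forall>u\<in>{0..1}. C u v2 = u * v2))"
  proof
    assume h: "(\<forall>u\<in>{0..1}. C u v1 = max (u + v1 - 1) 0) \<and> (\<forall>u\<in>{0..1}. C u v2 = u * v2)"
    have "C (1 - v1) v2 - C (1 - v1) v1 \<le> C 1 v2 - C 1 v1" using D[of "1 - v1" 1] v by simp
    then show False using h v p1 by (simp add: algebra_simps)
  qed
  show "\<not> ((\<forall>u\<in>{0..1}. C u v1 = u * v1) \<and> (\<forall>u\<in>{0..1}. C u v2 = max (u + v2 - 1) 0))"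
  proof
    assume h: "(\<forall>u\<in>{0..1}. C u v1 = u * v1) \<and> (\<forall>u\<in>{0..1}. C u v2 = max (u + v2 - 1) 0)"
    have "C 0 v2 - C 0 v1 \<le> C (1 - v2) v2 - C (1 - v2) v1" using D[of 0 "1 - v2"] v by simp
    moreover have "0 < (1 - v2) * v1" using v by simp
    ultimately show False using h v by (simp add: algebra_simps)
  qed
  show "\<not> ((\<forall>u\<in>{0..1}. C u v1 = min u v1) \<and> (\<forall>u\<in>{0..1}. C u v2 = max (u + v2 - 1) 0))"
  proof
    assume h: "(\<forall>u\<in>{0..1}. C u v1 = min u v1) \<and> (\<forall>u\<in>{0..1}. C u v2 = max (u + v2 - 1) 0)"
    have "C 0 v2 - C 0 v1 \<le> C v1 v2 - C v1 v1" using D[of 0 v1] v by simp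
    then show False using h v by simp
  qed
  show "\<not> ((\<forall>u\<in>{0..1}. C u v1 = max (u + v1 - 1) 0) \<and> (\<forall>u\<in>{0..1}. C u v2 = min u v2))"
  proof
    assume h: "(\<forall>u\<in>{0..1}. C u v1 = max (u + v1 - 1) 0) \<and> (\<forall>u\<in>{0..1}. C u v2 = min u v2)"
    have "C v2 v2 - C v2 v1 \<le> C 1 v2 - C 1 v1" using D[of v2 1] v by simp
    then show False using h v by simp
  qed
qed

lemma types_global:
  assumes cop: "copula C" and N: "negligible N"
    and good: "\<And>w. w \<in> {0..1} - N \<Longrightarrow> (\<forall>u\<in>{0..1}. C u w = u * w) \<or> (\<forall>u\<in>{0..1}. C u w = min u w)
       \<or> (\<forall>u\<in>{0..1}. C u w = max (u + w - 1) 0)"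
  shows "eq_on_square C copW \<or> eq_on_square C copPi \<or> eq_on_square C copM"
proof -
  define P where "P w \<longleftrightarrow> (\<forall>u\<in>{0..1}. C u w = u * w)" for w
  define M where "M w \<longleftrightarrow> (\<forall>u\<in>{0..1}. C u w = min u w)" for w
  define W where "W w \<longleftrightarrow> (\<forall>u\<in>{0..1}. C u w = max (u + w - 1) 0)" for w
  obtain v0 where v0: "v0 \<in> {0<..<1} - N" using good_point[OF N, of "1/2" 1] by auto
  have sep: "(P v \<longrightarrow> \<not> M w \<and> \<not> W w) \<and> (M v \<longrightarrow> \<not> P w \<and> \<not> W w) \<and> (W v \<longrightarrow> \<not> P w \<and> \<not> M w)"
    if "v \<in> {0<..<1}" "w \<in> {0<..<1}" "v \<noteq> w" for v w
  proof (cases "v < w")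
    case True
    then show ?thesis using excl[OF cop, of v w] that unfolding P_def M_def W_def by auto
  next
    case False
    then have "w < v" using that by auto
    then show ?thesis using excl[OF cop, of w v] that unfolding P_def M_def W_def by auto
  qed
  have goodw: "P w \<or> M w \<or> W w" if "w \<in> {0<..<1} - N" for w
    using good[of w] that unfolding P_def M_def W_def by auto
  have all: "\<forall>w\<in>{0<..<1} - N. Q w" if Q: "Q v0" "Q = P \<or> Q = M \<or> Q = W" for Q
  proof
    fix w assume w: "w \<in> {0<..<1} - N"
    show "Q w"
    proof (cases "w = v0")
      case True then show ?thesis using Q by simp
    next
      case False
      then show ?thesis using sep[of v0 w] goodw[OF w] w v0 Q by auto
    qed
  qed
  from goodw[OF v0] show ?thesis
  proof (elim disjE)
    assume "P v0"
    then have g: "\<forall>w\<in>{0<..<1} - N. P w" using all[of P] by simp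
    have "\<forall>u\<in>{0..1}. \<forall>v\<in>{0..1}. C u v = u * v"
    proof (rule density_type[OF cop N])
      show "\<bar>u * v - u * w\<bar> \<le> \<bar>v - w\<bar>" if "u \<in> {0..1}" "v \<in> {0..1}" "w \<in> {0..1}" for u v w :: real
      proof -
        have "\<bar>u * v - u * w\<bar> = \<bar>u\<bar> * \<bar>v - w\<bar>" by (simp add: abs_mult right_diff_distrib[symmetric])
        also have "\<dots> \<le> 1 * \<bar>v - w\<bar>" using that by (intro mult_right_mono) auto
        finally show ?thesis by simp
      qed
      show "\<forall>u\<in>{0..1}. C u w = u * w" if "w \<in> {0<..<1} - N" for w using g that by (simp add: P_def)
    qed
    then show ?thesis by (simp add: eq_on_square_def copPi_def)
  next
    assume "M v0"
    then have g: "\<forall>w\<in>{0<..<1} - N. M w" using all[of M] by simp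
    have "\<forall>u\<in>{0..1}. \<forall>v\<in>{0..1}. C u v = min u v"
    proof (rule density_type[OF cop N])
      show "\<bar>min u v - min u w\<bar> \<le> \<bar>v - w\<bar>" for u v w :: real by (auto simp: min_def)
      show "\<forall>u\<in>{0..1}. C u w = min u w" if "w \<in> {0<..<1} - N" for w using g that by (simp add: M_def)
    qed
    then show ?thesis by (simp add: eq_on_square_def copM_def)
  next
    assume "W v0"
    then have g: "\<forall>w\<in>{0<..<1} - N. W w" using all[of W] by simp
    have "\<forall>u\<in>{0..1}. \<forall>v\<in>{0..1}. C u v = max (u + v - 1) 0"
    proof (rule density_type[OF cop N])
      show "\<bar>max (u + v - 1) 0 - max (u + w - 1) 0\<bar> \<le> \<bar>v - w\<bar>" for u v w :: real by (auto simp: max_def)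
      show "\<forall>u\<in>{0..1}. C u w = max (u + w - 1) 0" if "w \<in> {0<..<1} - N" for w using g that by (simp add: W_def)
    qed
    then show ?thesis by (simp add: eq_on_square_def copW_def)
  qed
qed

lemma int_sq: "((\<lambda>v. v^2) has_integral 1/3) {0..1::real}"
proof -
  have "((\<lambda>v. v^2) has_integral (1^3 / 3 - 0^3 / 3)) {0..1::real}"
    by (rule fundamental_theorem_of_calculus)
       (auto intro!: derivative_eq_intros simp: has_real_derivative_iff_has_vector_derivative[symmetric] power2_eq_square)
  then show ?thesis by simp
qed

lemma int_v: "((\<lambda>v. v) has_integral 1/2) {0..1::real}"
  using int_id[of 0 1] by simp

lemma spearman_iter:
  assumes cop: "copula C"
  shows "spearman_rho C = 12 * integral {0..1} (\<lambda>v. integral {0..1} (\<lambda>u. C u v)) - 3"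
proof -
  have sq: "{0..1} \<times> {0..1} = cbox (0::real, 0::real) (1, 1)" by (simp add: cbox_Pair_eq)
  have "integral (cbox (0::real, 0::real) (1, 1)) (\<lambda>(u, v). C u v)
      = integral (cbox 0 1) (\<lambda>u. integral (cbox 0 1) (\<lambda>v. (\<lambda>(u, v). C u v) (u, v)))"
    by (rule integral_prod_continuous[OF cop_cont2[OF cop]])
  also have "\<dots> = integral (cbox 0 1) (\<lambda>u. integral (cbox 0 1) (\<lambda>v. C u v))" by simp
  also have "\<dots> = integral (cbox 0 1) (\<lambda>v. integral (cbox 0 1) (\<lambda>u. C u v))"
    by (rule integral_swap_continuous) (use cop_cont2[OF cop] in simp)
  finally show ?thesis unfolding spearman_rho_def sq by simp
qed

lemma B_lip:
  assumes cop: "copula C" and v: "v \<in> {0..1}" and w: "w \<in> {0..1}"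
  shows "\<bar>integral {0..1} (\<lambda>u. C u v) - integral {0..1} (\<lambda>u. C u w)\<bar> \<le> \<bar>v - w\<bar>"
proof -
  have c: "continuous_on {0..1} (\<lambda>u. C u x)" if "x \<in> {0..1}" for x
    by (rule lip1_cont) (use cop_lip_u[OF cop] that in auto)
  have i: "(\<lambda>u. C u x) integrable_on {0..1}" if "x \<in> {0..1}" for x
    using integrable_continuous_real[OF c[OF that]] .
  have "integral {0..1} (\<lambda>u. C u v - C u w) = integral {0..1} (\<lambda>u. C u v) - integral {0..1} (\<lambda>u. C u w)"
    by (rule integral_diff[OF i[OF v] i[OF w]])
  moreover have "- \<bar>v - w\<bar> * (1 - 0) \<le> integral {0..1} (\<lambda>u. C u v - C u w) \<and> integral {0..1} (\<lambda>u. C u v - C u w) \<le> \<bar>v - w\<bar> * (1 - 0)"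
  proof (rule int_bounds)
    show "(\<lambda>u. C u v - C u w) integrable_on {0..1}" by (rule integrable_diff[OF i[OF v] i[OF w]])
    fix x :: real assume x: "x \<in> {0..1}"
    have "\<bar>C x v - C x w\<bar> \<le> \<bar>v - w\<bar>" by (rule cop_lip_v[OF cop v w x])
    then show "- \<bar>v - w\<bar> \<le> C x v - C x w \<and> C x v - C x w \<le> \<bar>v - w\<bar>" by linarith
  qed simp
  ultimately show ?thesis by auto
qed

theorem theorem1p3:
  fixes C :: "real \<Rightarrow> real \<Rightarrow> real"
  assumes "copula C"
    and "SI C \<or> SD C"
  shows "chatterjee_xi C \<le> \<bar>spearman_rho C\<bar>
    \<and> (chatterjee_xi C = \<bar>spearman_rho C\<bar> \<longleftrightarrow>
         eq_on_square C copW \<or> eq_on_square C copPi \<or> eq_on_square C copM)"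
proof -
  note cop = assms(1)
  obtain \<sigma> :: real where \<sigma>: "\<sigma> = 1 \<or> \<sigma> = -1"
    and sc: "\<And>v. v \<in> {0..1} \<Longrightarrow> (\<sigma> = 1 \<and> concave_on {0..1} (\<lambda>u. C u v)) \<or> (\<sigma> = -1 \<and> convex_on {0..1} (\<lambda>u. C u v))"
  proof (cases "SI C")
    case True
    show ?thesis by (rule that[of 1]) (use True in \<open>auto simp: SI_def\<close>)
  next
    case False
    then have "SD C" using assms(2) by simp
    show ?thesis by (rule that[of "-1"]) (use \<open>SD C\<close> in \<open>auto simp: SD_def\<close>)
  qed
  define A where "A v = integral {0..1} (\<lambda>t. (d1 C t v)^2)" for v
  define B where "B v = integral {0..1} (\<lambda>u. C u v)" for v
  define R where "R v = v^2 + \<sigma> * (2 * B v - v)" for v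
  define IB where "IB = integral {0..1} B"
  have PV: "A v \<le> R v
    \<and> (A v = R v \<longrightarrow>
        (\<forall>u\<in>{0..1}. C u v = u * v) \<or> (\<forall>u\<in>{0..1}. C u v = min u v) \<or> (\<forall>u\<in>{0..1}. C u v = max (u + v - 1) 0))
    \<and> ((\<forall>u\<in>{0..1}. C u v = u * v) \<longrightarrow> A v = v^2)
    \<and> ((\<forall>u\<in>{0..1}. C u v = min u v) \<or> (\<forall>u\<in>{0..1}. C u v = max (u + v - 1) 0) \<longrightarrow> A v = v)"
    if v: "v \<in> {0..1}" for v
    using per_v[OF cop v sc[OF v]] unfolding A_def B_def R_def .
  have PV1: "A v \<le> R v" if "v \<in> {0..1}" for v using PV[OF that] by blast
  have PV2: "(\<forall>u\<in>{0..1}. C u v = u * v) \<or> (\<forall>u\<in>{0..1}. C u v = min u v) \<or> (\<forall>u\<in>{0..1}. C u v = max (u + v - 1) 0)"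
    if "v \<in> {0..1}" "A v = R v" for v using PV[OF that(1)] that(2) by blast
  have PV3: "A v = v^2" if "v \<in> {0..1}" "\<forall>u\<in>{0..1}. C u v = u * v" for v using PV[OF that(1)] that(2) by blast
  have PV4: "A v = v" if "v \<in> {0..1}" "(\<forall>u\<in>{0..1}. C u v = min u v) \<or> (\<forall>u\<in>{0..1}. C u v = max (u + v - 1) 0)" for v
    using PV[OF that(1)] that(2) by blast
  have onsq: "\<forall>u\<in>{0..1}. C u v = T u v" if "eq_on_square C T" "v \<in> {0..1}" for T v
    using that by (simp add: eq_on_square_def)
  have AW: "\<forall>v\<in>{0..1}. A v = v" if "eq_on_square C copW" using PV4 onsq[OF that] by (simp add: copW_def)
  have AM: "\<forall>v\<in>{0..1}. A v = v" if "eq_on_square C copM" using PV4 onsq[OF that] by (simp add: copM_def)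
  have AP: "\<forall>v\<in>{0..1}. A v = v^2" if "eq_on_square C copPi" using PV3 onsq[OF that] by (simp add: copPi_def)
  have Aeq: "A = (\<lambda>v. integral {0..1} (\<lambda>t. (d1 C t v)^2))" by (rule ext) (simp add: A_def)
  have Beq: "B = (\<lambda>v. integral {0..1} (\<lambda>u. C u v))" by (rule ext) (simp add: B_def)
  have xi: "chatterjee_xi C = 6 * integral {0..1} A - 2" by (simp add: chatterjee_xi_def Aeq)
  have rho: "spearman_rho C = 12 * IB - 3" using spearman_iter[OF cop] by (simp add: IB_def Beq)
  have Bc: "continuous_on {0..1} B"
    by (rule lip1_cont) (use B_lip[OF cop] in \<open>auto simp: B_def\<close>)
  have Bint: "(B has_integral IB) {0..1}"
    using integrable_continuous_real[OF Bc] by (simp add: IB_def integrable_integral)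
  have Rint: "(R has_integral (1/3 + \<sigma> * (2 * IB - 1/2))) {0..1}"
  proof -
    have "((\<lambda>v. v^2 + \<sigma> * (2 * B v - v)) has_integral (1/3 + \<sigma> * (2 * IB - 1/2))) {0..1}"
      by (intro has_integral_add int_sq has_integral_mult_right has_integral_diff Bint int_v)
    then show ?thesis by (simp add: R_def[abs_def])
  qed
  have Bsign: "0 \<le> \<sigma> * (2 * B v - v)" if v: "v \<in> {0..1}" for v
  proof -
    have Fc: "continuous_on {0..1} (\<lambda>u. C u v)"
      by (rule lip1_cont) (use cop_lip_u[OF cop] v in auto)
    have Bi: "((\<lambda>u. C u v) has_integral B v) {0..1}"
      using integrable_continuous_real[OF Fc] by (simp add: B_def integrable_integral)
    have bd: "C 0 v = 0" "C 1 v = v" using cop v unfolding copula_def by auto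
    from sc[OF v] show ?thesis
    proof
      assume c: "\<sigma> = 1 \<and> concave_on {0..1} (\<lambda>u. C u v)"
      have "u * v \<le> C u v" if "u \<in> {0..1}" for u
        using concave_onD[OF conjunct2[OF c], of u 0 1] that bd by (auto simp: algebra_simps)
      then have "v / 2 \<le> B v" using has_integral_le[OF int_uv Bi] by auto
      then show ?thesis using c by simp
    next
      assume c: "\<sigma> = -1 \<and> convex_on {0..1} (\<lambda>u. C u v)"
      have "C u v \<le> u * v" if "u \<in> {0..1}" for u
        using convex_onD[OF conjunct2[OF c], of u 0 1] that bd by (auto simp: algebra_simps)
      then have "B v \<le> v / 2" using has_integral_le[OF Bi int_uv] by auto
      then show ?thesis using c by simp
    qed
  qed
  have rsign: "0 \<le> \<sigma> * (2 * IB - 1/2)"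
  proof -
    have "((\<lambda>v. \<sigma> * (2 * B v - v)) has_integral \<sigma> * (2 * IB - 1/2)) {0..1}"
      by (intro has_integral_mult_right has_integral_diff Bint int_v)
    then show ?thesis using has_integral_nonneg Bsign by blast
  qed
  have absrho: "\<bar>spearman_rho C\<bar> = 6 * (\<sigma> * (2 * IB - 1/2))"
    using rsign \<sigma> unfolding rho by (auto simp: abs_if algebra_simps)
  have rho_nn: "0 \<le> \<bar>spearman_rho C\<bar>" by simp
  show ?thesis
  proof (cases "A integrable_on {0..1}")
    case False
    then have "integral {0..1} A = 0" by (rule not_integrable_integral)
    then have xim: "chatterjee_xi C = -2" using xi by simp
    have nW: "\<not> (eq_on_square C copW \<or> eq_on_square C copPi \<or> eq_on_square C copM)"
    proof
      assume h: "eq_on_square C copW \<or> eq_on_square C copPi \<or> eq_on_square C copM"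
      have "A integrable_on {0..1}"
      proof -
        from h show ?thesis
        proof (elim disjE)
          assume "eq_on_square C copPi"
          then have "\<forall>v\<in>{0..1}. A v = v^2" by (rule AP)
          then show ?thesis using has_integral_eq[OF _ int_sq, of A] by (auto simp: integrable_on_def)
        next
          assume "eq_on_square C copW"
          then have "\<forall>v\<in>{0..1}. A v = v" by (rule AW)
          then show ?thesis using has_integral_eq[OF _ int_v, of A] by (auto simp: integrable_on_def)
        next
          assume "eq_on_square C copM"
          then have "\<forall>v\<in>{0..1}. A v = v" by (rule AM)
          then show ?thesis using has_integral_eq[OF _ int_v, of A] by (auto simp: integrable_on_def)
        qed
      qed
      then show False using False by simp
    qed
    show ?thesis using xim rho_nn nW by auto
  next
    case True
    have le: "integral {0..1} A \<le> 1/3 + \<sigma> * (2 * IB - 1/2)"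
      using Henstock_Kurzweil_Integration.integral_le[OF True has_integral_integrable[OF Rint] PV1]
        integral_unique[OF Rint] by simp
    have ineq: "chatterjee_xi C \<le> \<bar>spearman_rho C\<bar>" using le xi absrho by simp
    have fwd: "eq_on_square C copW \<or> eq_on_square C copPi \<or> eq_on_square C copM"
      if eq: "chatterjee_xi C = \<bar>spearman_rho C\<bar>"
    proof -
      have "integral {0..1} A = 1/3 + \<sigma> * (2 * IB - 1/2)" using eq xi absrho by simp
      then have D0: "((\<lambda>v. R v - A v) has_integral 0) {0..1}"
        using has_integral_diff[OF Rint integrable_integral[OF True]] by simp
      have negN: "negligible {v \<in> {0..1}. R v - A v \<noteq> 0}"
        by (rule integral0_negligible[OF D0]) (use PV1 in auto)
      show ?thesis
      proof (rule types_global[OF cop negN])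
        fix w assume w: "w \<in> {0..1} - {v \<in> {0..1}. R v - A v \<noteq> 0}"
        then have "A w = R w" "w \<in> {0..1}" by auto
        then show "(\<forall>u\<in>{0..1}. C u w = u * w) \<or> (\<forall>u\<in>{0..1}. C u w = min u w) \<or> (\<forall>u\<in>{0..1}. C u w = max (u + w - 1) 0)"
          using PV2 by blast
      qed
    qed
    have bwd: "chatterjee_xi C = \<bar>spearman_rho C\<bar>"
      if h: "eq_on_square C copW \<or> eq_on_square C copPi \<or> eq_on_square C copM"
    proof -
      have "(integral {0..1} A = 1/3 \<and> IB = 1/4) \<or> (integral {0..1} A = 1/2 \<and> (IB = 1/3 \<or> IB = 1/6))"
      proof -
        from h show ?thesis
        proof (elim disjE)
          assume E: "eq_on_square C copW"
          then have Av: "\<forall>v\<in>{0..1}. A v = v" by (rule AW)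
          have Bv: "\<forall>v\<in>{0..1}. B v = v^2 / 2"
          proof
            fix v :: real assume v: "v \<in> {0..1}"
            have "((\<lambda>u. C u v) has_integral v^2 / 2) {0..1}"
              by (rule has_integral_eq[OF _ int_W[OF v]]) (use E v in \<open>auto simp: eq_on_square_def copW_def\<close>)
            then show "B v = v^2 / 2" by (simp add: B_def integral_unique)
          qed
          have "(A has_integral 1/2) {0..1}" by (rule has_integral_eq[OF _ int_v]) (use Av in auto)
          moreover have "(B has_integral 1/6) {0..1}"
          proof -
            have "((\<lambda>v. v^2 / 2) has_integral 1/6) {0..1::real}"
              using has_integral_mult_left[OF int_sq, of "1/2"] by simp
            then show ?thesis by (rule has_integral_eq[rotated]) (use Bv in auto)
          qed
          ultimately show ?thesis by (simp add: IB_def integral_unique)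
        next
          assume E: "eq_on_square C copPi"
          then have Av: "\<forall>v\<in>{0..1}. A v = v^2" by (rule AP)
          have Bv: "\<forall>v\<in>{0..1}. B v = v / 2"
          proof
            fix v :: real assume v: "v \<in> {0..1}"
            have "((\<lambda>u. C u v) has_integral v / 2) {0..1}"
              by (rule has_integral_eq[OF _ int_uv]) (use E v in \<open>auto simp: eq_on_square_def copPi_def\<close>)
            then show "B v = v / 2" by (simp add: B_def integral_unique)
          qed
          have "(A has_integral 1/3) {0..1}" by (rule has_integral_eq[OF _ int_sq]) (use Av in auto)
          moreover have "(B has_integral 1/4) {0..1}"
          proof -
            have "((\<lambda>v. v / 2) has_integral 1/4) {0..1::real}"
              using has_integral_mult_left[OF int_v, of "1/2"] by simp
            then show ?thesis by (rule has_integral_eq[rotated]) (use Bv in auto)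
          qed
          ultimately show ?thesis by (simp add: IB_def integral_unique)
        next
          assume E: "eq_on_square C copM"
          then have Av: "\<forall>v\<in>{0..1}. A v = v" by (rule AM)
          have Bv: "\<forall>v\<in>{0..1}. B v = v - v^2 / 2"
          proof
            fix v :: real assume v: "v \<in> {0..1}"
            have "((\<lambda>u. C u v) has_integral v - v^2 / 2) {0..1}"
              by (rule has_integral_eq[OF _ int_M[OF v]]) (use E v in \<open>auto simp: eq_on_square_def copM_def\<close>)
            then show "B v = v - v^2 / 2" by (simp add: B_def integral_unique)
          qed
          have "(A has_integral 1/2) {0..1}" by (rule has_integral_eq[OF _ int_v]) (use Av in auto)
          moreover have "(B has_integral 1/3) {0..1}"
          proof -
            have "((\<lambda>v. v - v^2 / 2) has_integral 1/3) {0..1::real}"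
              using has_integral_diff[OF int_v has_integral_mult_left[OF int_sq, of "1/2"]]
              by simp
            then show ?thesis by (rule has_integral_eq[rotated]) (use Bv in auto)
          qed
          ultimately show ?thesis by (simp add: IB_def integral_unique)
        qed
      qed
      then show ?thesis unfolding xi rho by auto
    qed
    show ?thesis using ineq fwd bwd by blast
  qed
qed

end
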